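(* Let $n\ge1$, let $r_{\max}(n):=\left\lfloor(\sqrt{1+8n}-1)/2\right\rfloor$, and let $C_n$ be an extreme point of the elliptope $\mathcal{E}_n$ with $\mathrm{rank}(C_n)=r_{\max}(n)$. Then $$\mathcal{D}(\mathbf{p}_{C_n})\ge\sqrt{2}^{\,\lfloor r_{\max}(n)/2\rfloor}.$$
   Context: $\mathcal{E}_n:=\{X\in\mathcal{S}^n_+: X_{ii}=1\ \forall i\}$ (real symmetric psd matrices with unit diagonal). For a matrix $C=(c_{xy})\in\mathcal{E}_n$ (which has entries in $[-1,1]$), $\mathbf{p}_C$ is the behavior in the $(n,n,2,2)$-scenario with outcomes $a,b\in\{\pm1\}$ given by $p_C(ab|xy)=\frac{1+ab\,c_{xy}}{4}$; it is a quantum behavior. A behavior $\mathbf{p}$ has a $d$-dimensional quantum representation if there exist a Hermitian psd trace-one $\rho$ on $\mathbb{C}^d\otimes\mathbb{C}^d$ and, for each $x$, Hermitian psd $d\times d$ matrices $\{M_{a|x}\}_a$ summing to $I_d$ and, for each $y$, Hermitian psd $d\times d$ matrices $\{N_{b|y}\}_b$ summing to $I_d$, with $p(ab|xy)=\mathrm{Tr}((M_{a|x}\otimes N_{b|y})\rho)$ for all $a,b,x,y$; $\mathcal{D}(\mathbf{p})$ is the least such $d$. *)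

theory Defs
  imports "HOL-Analysis.Analysis"
begin

definition real_psd :: "real^'n^'n \<Rightarrow> bool" where
  "real_psd X \<longleftrightarrow> transpose X = X \<and> (\<forall>v::real^'n. 0 \<le> v \<bullet> (X *v v))"

definition elliptope :: "(real^'n^'n) set" where
  "elliptope = {X. real_psd X \<and> (\<forall>i. X $ i $ i = 1)}"

definition r_max :: "nat \<Rightarrow> nat" where
  "r_max n = nat \<lfloor>(sqrt (1 + 8 * real n) - 1) / 2\<rfloor>"

definition outcomes :: "int set" where "outcomes = {-1, 1}"

text \<open>A behaviour is p a b x y = p(ab|xy).\<close>
definition p_C :: "real^'n^'n \<Rightarrow> int \<Rightarrow> int \<Rightarrow> 'n \<Rightarrow> 'n \<Rightarrow> real" where
  "p_C C a b x y = (1 + real_of_int (a * b) * C $ x $ y) / 4"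

type_synonym 'i cmat = "'i \<Rightarrow> 'i \<Rightarrow> complex"

definition hermitian_on :: "'i set \<Rightarrow> 'i cmat \<Rightarrow> bool" where
  "hermitian_on I M \<longleftrightarrow> (\<forall>i\<in>I. \<forall>j\<in>I. M j i = cnj (M i j))"

definition cpsd_on :: "'i set \<Rightarrow> 'i cmat \<Rightarrow> bool" where
  "cpsd_on I M \<longleftrightarrow> hermitian_on I M \<and>
     (\<forall>v::'i \<Rightarrow> complex. 0 \<le> Re (\<Sum>i\<in>I. \<Sum>j\<in>I. cnj (v i) * M i j * v j))"

definition ctrace_on :: "'i set \<Rightarrow> 'i cmat \<Rightarrow> complex" where
  "ctrace_on I M = (\<Sum>i\<in>I. M i i)"

definition cmult_on :: "'i set \<Rightarrow> 'i cmat \<Rightarrow> 'i cmat \<Rightarrow> 'i cmat" where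
  "cmult_on I A B = (\<lambda>i k. \<Sum>j\<in>I. A i j * B j k)"

definition cident :: "nat cmat" where
  "cident = (\<lambda>i j. if i = j then 1 else 0)"

text \<open>Matrices on C^d use indices {..<d}; matrices on C^d \<otimes> C^d use indices {..<d} \<times> {..<d}.\<close>
definition tensor :: "nat cmat \<Rightarrow> nat cmat \<Rightarrow> (nat \<times> nat) cmat" where
  "tensor M N = (\<lambda>(i, j) (k, l). M i k * N j l)"

definition is_povm :: "nat \<Rightarrow> (int \<Rightarrow> nat cmat) \<Rightarrow> bool" where
  "is_povm d M \<longleftrightarrow> (\<forall>a\<in>outcomes. cpsd_on {..<d} (M a)) \<and>
     (\<forall>i<d. \<forall>j<d. (\<Sum>a\<in>outcomes. M a i j) = cident i j)"

definition has_qrep :: "nat \<Rightarrow> (int \<Rightarrow> int \<Rightarrow> 'n \<Rightarrow> 'n \<Rightarrow> real) \<Rightarrow> bool" where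
  "has_qrep d p \<longleftrightarrow>
    (\<exists>(\<rho>::(nat \<times> nat) cmat) (M::'n \<Rightarrow> int \<Rightarrow> nat cmat) (N::'n \<Rightarrow> int \<Rightarrow> nat cmat).
       cpsd_on ({..<d} \<times> {..<d}) \<rho> \<and> ctrace_on ({..<d} \<times> {..<d}) \<rho> = 1 \<and>
       (\<forall>x. is_povm d (M x)) \<and> (\<forall>y. is_povm d (N y)) \<and>
       (\<forall>a\<in>outcomes. \<forall>b\<in>outcomes. \<forall>x y.
          complex_of_real (p a b x y) =
          ctrace_on ({..<d} \<times> {..<d})
            (cmult_on ({..<d} \<times> {..<d}) (tensor (M x a) (N y b)) \<rho>)))"

definition qdim :: "(int \<Rightarrow> int \<Rightarrow> 'n \<Rightarrow> 'n \<Rightarrow> real) \<Rightarrow> nat" where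
  "qdim p = (LEAST d. has_qrep d p)"

end

theory Submission
  imports Defs
begin

definition ip :: "'j set \<Rightarrow> ('j \<Rightarrow> complex) \<Rightarrow> ('j \<Rightarrow> complex) \<Rightarrow> complex" where
  "ip J v w = (\<Sum>j\<in>J. cnj (v j) * w j)"

definition app :: "'j set \<Rightarrow> ('j \<Rightarrow> 'j \<Rightarrow> complex) \<Rightarrow> ('j \<Rightarrow> complex) \<Rightarrow> ('j \<Rightarrow> complex)" where
  "app J T v = (\<lambda>i. if i \<in> J then \<Sum>k\<in>J. T i k * v k else 0)"

definition Sp :: "'j set \<Rightarrow> ('j \<Rightarrow> complex) set" where
  "Sp J = {v. \<forall>j. j \<notin> J \<longrightarrow> v j = 0}"

lemma ip_add_right: "ip J v (\<lambda>j. w j + u j) = ip J v w + ip J v u"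
  by (simp add: ip_def distrib_left sum.distrib)
lemma ip_diff_right: "ip J v (\<lambda>j. w j - u j) = ip J v w - ip J v u"
  unfolding ip_def right_diff_distrib by (rule sum_subtractf)
lemma ip_scale_right: "ip J v (\<lambda>j. c * w j) = c * ip J v w"
  by (simp add: ip_def sum_distrib_left algebra_simps)
lemma ip_add_left: "ip J (\<lambda>j. w j + u j) v = ip J w v + ip J u v"
  by (simp add: ip_def distrib_right sum.distrib)
lemma ip_diff_left: "ip J (\<lambda>j. w j - u j) v = ip J w v - ip J u v"
  unfolding ip_def complex_cnj_diff left_diff_distrib by (rule sum_subtractf)
lemma ip_scale_left: "ip J (\<lambda>j. c * w j) v = cnj c * ip J w v"
  by (simp add: ip_def sum_distrib_left algebra_simps)
lemma ip_sum_right: "ip J v (\<lambda>j. \<Sum>x\<in>X. f x j) = (\<Sum>x\<in>X. ip J v (f x))"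
  unfolding ip_def sum_distrib_left by (rule sum.swap)
lemma ip_sum_left: "ip J (\<lambda>j. \<Sum>x\<in>X. f x j) v = (\<Sum>x\<in>X. ip J (f x) v)"
  unfolding ip_def by (simp add: sum_distrib_right) (rule sum.swap)
lemma ip_cnj: "cnj (ip J v w) = ip J w v"
  by (simp add: ip_def mult.commute)
lemma ip_zero_right[simp]: "ip J v (\<lambda>j. 0) = 0" by (simp add: ip_def)
lemma ip_zero_left[simp]: "ip J (\<lambda>j. 0) v = 0" by (simp add: ip_def)

lemma ip_self: "ip J v v = complex_of_real (\<Sum>j\<in>J. (cmod (v j))\<^sup>2)"
  unfolding ip_def of_real_sum by (rule sum.cong) (simp_all add: complex_norm_square[symmetric] mult.commute)

lemma ip_self_Re: "Re (ip J v v) = (\<Sum>j\<in>J. (cmod (v j))\<^sup>2)" "Im (ip J v v) = 0"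
  by (simp_all add: ip_self)

lemma ip_self_ge0: "0 \<le> Re (ip J v v)"
  by (simp add: ip_self_Re sum_nonneg)

lemma ip_self_of_Re: "ip J v v = complex_of_real (Re (ip J v v))"
  by (simp add: ip_self)

lemma ip_self_zero:
  assumes "finite J" "v \<in> Sp J" "Re (ip J v v) = 0" shows "v = (\<lambda>j. 0)"
proof
  fix j
  show "v j = 0"
  proof (cases "j \<in> J")
    case True
    have "(\<Sum>j\<in>J. (cmod (v j))\<^sup>2) = 0" using assms(3) by (simp add: ip_self_Re)
    then have "\<forall>j\<in>J. (cmod (v j))\<^sup>2 = 0" using assms(1) by (subst (asm) sum_nonneg_eq_0_iff) auto
    then show ?thesis using True by simp
  next
    case False then show ?thesis using assms(2) by (simp add: Sp_def)
  qed
qed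

lemma CS:
  shows "(cmod (ip J v w))\<^sup>2 \<le> Re (ip J v v) * Re (ip J w w)"
proof -
  have "cmod (ip J v w) \<le> (\<Sum>j\<in>J. cmod (v j) * cmod (w j))"
    unfolding ip_def by (rule order_trans[OF norm_sum]) (simp add: norm_mult)
  then have "(cmod (ip J v w))\<^sup>2 \<le> (\<Sum>j\<in>J. cmod (v j) * cmod (w j))\<^sup>2"
    by (simp add: power_mono)
  also have "\<dots> \<le> (\<Sum>j\<in>J. (cmod (v j))\<^sup>2) * (\<Sum>j\<in>J. (cmod (w j))\<^sup>2)"
    by (rule Cauchy_Schwarz_ineq_sum)
  finally show ?thesis by (simp add: ip_self_Re)
qed

lemma app_Sp: "app J T v \<in> Sp J" by (simp add: app_def Sp_def)

lemma app_add: "app J T (\<lambda>j. v j + w j) = (\<lambda>j. app J T v j + app J T w j)"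
  unfolding app_def by (rule ext) (simp add: distrib_left sum.distrib)
lemma app_diff: "app J T (\<lambda>j. v j - w j) = (\<lambda>j. app J T v j - app J T w j)"
  unfolding app_def by (rule ext) (simp add: right_diff_distrib sum_subtractf)
lemma app_scale: "app J T (\<lambda>j. c * v j) = (\<lambda>j. c * app J T v j)"
  by (auto simp add: app_def sum_distrib_left algebra_simps)
lemma app_sum: "app J T (\<lambda>j. \<Sum>x\<in>X. f x j) = (\<lambda>j. \<Sum>x\<in>X. app J T (f x) j)"
proof
  fix i show "app J T (\<lambda>j. \<Sum>x\<in>X. f x j) i = (\<Sum>x\<in>X. app J T (f x) i)"
    by (cases "i \<in> J") (simp_all add: app_def sum_distrib_left, rule sum.swap)
qed
lemma app_zero[simp]: "app J T (\<lambda>j. 0) = (\<lambda>j. 0)"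
  by (auto simp add: app_def)

definition herm :: "'j set \<Rightarrow> ('j \<Rightarrow> 'j \<Rightarrow> complex) \<Rightarrow> bool" where
  "herm J T \<longleftrightarrow> (\<forall>i\<in>J. \<forall>k\<in>J. T k i = cnj (T i k))"

lemma ip_app_herm:
  assumes "herm J T" shows "ip J (app J T v) w = ip J v (app J T w)"
proof -
  have "ip J (app J T v) w = (\<Sum>i\<in>J. \<Sum>k\<in>J. cnj (T i k) * cnj (v k) * w i)"
    by (simp add: ip_def app_def sum_distrib_right)
  also have "\<dots> = (\<Sum>k\<in>J. \<Sum>i\<in>J. cnj (T i k) * cnj (v k) * w i)"
    by (rule sum.swap)
  also have "\<dots> = (\<Sum>k\<in>J. \<Sum>i\<in>J. cnj (v k) * (T k i * w i))"
  proof (rule sum.cong[OF refl], rule sum.cong[OF refl])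
    fix k i assume "k \<in> J" "i \<in> J"
    then have "T k i = cnj (T i k)" using assms unfolding herm_def by blast
    then show "cnj (T i k) * cnj (v k) * w i = cnj (v k) * (T k i * w i)" by simp
  qed
  also have "\<dots> = ip J v (app J T w)"
    by (simp add: ip_def app_def sum_distrib_left)
  finally show ?thesis .
qed

lemma Re_cnj_mult: "Re (cnj z * z) = (cmod z)\<^sup>2"
  using cmod_power2[of z] by (simp add: power2_eq_square)

lemma bessel:
  assumes finJ: "finite J" and finP: "finite P"
    and on: "\<forall>p\<in>P. \<forall>q\<in>P. ip J (v p) (v q) = (if p = q then 1 else 0)"
  shows "card P \<le> card J"
proof -
  have loc: "(\<Sum>p\<in>P. (cmod (v p i))\<^sup>2) \<le> 1" if iJ: "i \<in> J" for i
  proof -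
    define e where "e = (\<lambda>j. if j = i then (1::complex) else 0)"
    define s where "s = (\<lambda>j. \<Sum>p\<in>P. cnj (v p i) * v p j)"
    define u where "u = (\<lambda>j. e j - s j)"
    have "(\<lambda>j. cnj (e j) * e j) = e" by (auto simp: e_def)
    then have ee: "ip J e e = 1" using iJ finJ unfolding ip_def by (simp only:) (simp add: e_def)
    have ev: "ip J e (v p) = v p i" for p
    proof -
      have "(\<lambda>j. cnj (e j) * v p j) = (\<lambda>j. if j = i then v p j else 0)" by (auto simp: e_def)
      then show ?thesis using iJ finJ unfolding ip_def by (simp only:) simp
    qed
    have ve: "ip J (v p) e = cnj (v p i)" for p
    proof -
      have "(\<lambda>j. cnj (v p j) * e j) = (\<lambda>j. if j = i then cnj (v p j) else 0)" by (auto simp: e_def)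
      then show ?thesis using iJ finJ unfolding ip_def by (simp only:) simp
    qed
    define Q where "Q = (\<Sum>p\<in>P. cnj (v p i) * v p i)"
    have es: "ip J e s = Q"
    proof -
      have "ip J e s = (\<Sum>p\<in>P. ip J e (\<lambda>j. cnj (v p i) * v p j))" unfolding s_def by (rule ip_sum_right)
      then show ?thesis by (simp add: ip_scale_right ev Q_def)
    qed
    have se: "ip J s e = Q"
    proof -
      have "ip J s e = (\<Sum>p\<in>P. ip J (\<lambda>j. cnj (v p i) * v p j) e)" unfolding s_def by (rule ip_sum_left)
      also have "\<dots> = (\<Sum>p\<in>P. v p i * cnj (v p i))" by (simp only: ip_scale_left ve complex_cnj_cnj)
      finally show ?thesis by (simp add: Q_def mult.commute)
    qed
    have ss: "ip J s s = Q"
    proof -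
      have "ip J s s = (\<Sum>p\<in>P. ip J (\<lambda>j. cnj (v p i) * v p j) s)" unfolding s_def by (rule ip_sum_left)
      also have "\<dots> = (\<Sum>p\<in>P. v p i * ip J (v p) s)" by (simp add: ip_scale_left)
      also have "\<dots> = (\<Sum>p\<in>P. v p i * (\<Sum>q\<in>P. ip J (v p) (\<lambda>j. cnj (v q i) * v q j)))"
        unfolding s_def by (simp add: ip_sum_right)
      also have "\<dots> = (\<Sum>p\<in>P. v p i * (\<Sum>q\<in>P. cnj (v q i) * ip J (v p) (v q)))"
        by (simp add: ip_scale_right)
      also have "\<dots> = (\<Sum>p\<in>P. v p i * cnj (v p i))"
      proof (rule sum.cong[OF refl])
        fix p assume pP: "p \<in> P"
        have "(\<Sum>q\<in>P. cnj (v q i) * ip J (v p) (v q)) = (\<Sum>q\<in>P. if q = p then cnj (v q i) else 0)"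
          using on pP by (intro sum.cong) auto
        then show "v p i * (\<Sum>q\<in>P. cnj (v q i) * ip J (v p) (v q)) = v p i * cnj (v p i)"
          using pP finP by simp
      qed
      also have "\<dots> = Q" unfolding Q_def by (simp add: mult.commute)
      finally show ?thesis .
    qed
    have "ip J u u = 1 - Q"
      unfolding u_def by (simp add: ip_diff_left ip_diff_right ee es se ss)
    then have "0 \<le> Re (1 - Q)" using ip_self_ge0[of J u] by simp
    moreover have "Re Q = (\<Sum>p\<in>P. (cmod (v p i))\<^sup>2)" unfolding Q_def
      by (simp only: Re_sum Re_cnj_mult)
    ultimately show ?thesis by simp
  qed
  have "real (card P) = (\<Sum>p\<in>P. Re (ip J (v p) (v p)))" using on by simp
  also have "\<dots> = (\<Sum>p\<in>P. \<Sum>i\<in>J. (cmod (v p i))\<^sup>2)" by (simp add: ip_self_Re)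
  also have "\<dots> = (\<Sum>i\<in>J. \<Sum>p\<in>P. (cmod (v p i))\<^sup>2)" by (rule sum.swap)
  also have "\<dots> \<le> (\<Sum>i\<in>J. 1)" using loc by (intro sum_mono) auto
  finally show ?thesis by simp
qed

primrec word :: "'j set \<Rightarrow> (nat \<Rightarrow> 'j \<Rightarrow> 'j \<Rightarrow> complex) \<Rightarrow> nat list \<Rightarrow> ('j \<Rightarrow> complex) \<Rightarrow> ('j \<Rightarrow> complex)" where
  "word J g [] v = v"
| "word J g (i # l) v = app J (g i) (word J g l v)"

lemma word_append: "word J g (l1 @ l2) v = word J g l1 (word J g l2 v)"
  by (induction l1) auto

lemma word_add: "word J g l (\<lambda>j. v j + w j) = (\<lambda>j. word J g l v j + word J g l w j)"
  by (induction l) (auto simp: app_add)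

lemma word_scale: "word J g l (\<lambda>j. c * v j) = (\<lambda>j. c * word J g l v j)"
  by (induction l) (auto simp: app_scale)

lemma word_snoc: "word J g (l @ [i]) v = word J g l (app J (g i) v)"
  by (simp add: word_append)

lemma ip_word_herm:
  assumes "\<And>i. herm J (g i)"
  shows "ip J (word J g l v) w = ip J v (word J g (rev l) w)"
proof (induction l arbitrary: w)
  case Nil then show ?case by simp
next
  case (Cons i l)
  have "ip J (word J g (i # l) v) w = ip J (word J g l v) (app J (g i) w)"
    by (simp add: ip_app_herm[OF assms])
  also have "\<dots> = ip J v (word J g (rev l) (app J (g i) w))" by (rule Cons.IH)
  also have "\<dots> = ip J v (word J g (rev (i # l)) w)" by (simp add: word_snoc)
  finally show ?case .
qed

lemma count_distinct: "distinct xs \<Longrightarrow> count_list xs k = (if k \<in> set xs then 1 else 0)"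
  by (induction xs) auto

locale cliff =
  fixes J :: "'j set" and psi :: "'j \<Rightarrow> complex" and g h :: "nat \<Rightarrow> 'j \<Rightarrow> 'j \<Rightarrow> complex" and r :: nat
  assumes finJ: "finite J"
    and psi_Sp: "psi \<in> Sp J"
    and psi_norm: "ip J psi psi = 1"
    and herm_g: "\<And>i. herm J (g i)" and herm_h: "\<And>i. herm J (h i)"
    and comm: "\<And>i k v. app J (g i) (app J (h k) v) = app J (h k) (app J (g i) v)"
    and gh: "\<And>i. app J (g i) psi = app J (h i) psi"
    and anti: "\<And>i k. i < r \<Longrightarrow> k < r \<Longrightarrow>
       (\<lambda>j. app J (g i) (app J (g k) psi) j + app J (g k) (app J (g i) psi) j) = (\<lambda>j. (if i = k then 2 else 0) * psi j)"
begin

lemma comm_word: "app J (g i) (word J h l v) = word J h l (app J (g i) v)"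
  by (induction l) (auto simp: comm)

lemma comm_word2: "word J g l (app J (h k) v) = app J (h k) (word J g l v)"
  by (induction l) (auto simp: comm)

lemma gw_hw: "word J g l psi = word J h (rev l) psi"
proof (induction l)
  case Nil then show ?case by simp
next
  case (Cons i l)
  have "word J g (i # l) psi = app J (g i) (word J h (rev l) psi)" by (simp add: Cons.IH)
  also have "\<dots> = word J h (rev l) (app J (h i) psi)" by (simp add: comm_word gh)
  also have "\<dots> = word J h (rev (i # l)) psi" by (simp add: word_snoc)
  finally show ?case .
qed

lemma anti_word:
  assumes "i < r" "k < r"
  shows "(\<lambda>j. app J (g i) (app J (g k) (word J g l psi)) j + app J (g k) (app J (g i) (word J g l psi)) j)
       = (\<lambda>j. (if i = k then 2 else 0) * word J g l psi j)"
proof -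
  have "(\<lambda>j. app J (g i) (app J (g k) (word J g l psi)) j + app J (g k) (app J (g i) (word J g l psi)) j)
      = word J h (rev l) (\<lambda>j. app J (g i) (app J (g k) psi) j + app J (g k) (app J (g i) psi) j)"
    by (simp add: gw_hw comm_word word_add)
  also have "\<dots> = (\<lambda>j. (if i = k then 2 else 0) * word J g l psi j)"
    by (simp add: anti[OF assms] word_scale gw_hw)
  finally show ?thesis .
qed

lemma gg_word:
  assumes "i < r"
  shows "app J (g i) (app J (g i) (word J g l psi)) = word J g l psi"
proof -
  have "(\<lambda>j. app J (g i) (app J (g i) (word J g l psi)) j + app J (g i) (app J (g i) (word J g l psi)) j)
       = (\<lambda>j. 2 * word J g l psi j)" (is ?eq) using anti_word[OF assms assms, of l] by simp
  show ?thesis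
  proof
    fix j
    have "app J (g i) (app J (g i) (word J g l psi)) j + app J (g i) (app J (g i) (word J g l psi)) j
       = 2 * word J g l psi j" using fun_cong[OF \<open>?eq\<close>, of j] by simp
    then show "app J (g i) (app J (g i) (word J g l psi)) j = word J g l psi j" by simp
  qed
qed

lemma anti_word_ne:
  assumes "i < r" "k < r" "i \<noteq> k"
  shows "app J (g i) (app J (g k) (word J g l psi)) = (\<lambda>j. - app J (g k) (app J (g i) (word J g l psi)) j)"
proof
  fix j
  have "app J (g i) (app J (g k) (word J g l psi)) j + app J (g k) (app J (g i) (word J g l psi)) j = 0"
    using fun_cong[OF anti_word[OF assms(1,2), of l], of j] assms(3) by simp
  then show "app J (g i) (app J (g k) (word J g l psi)) j = - app J (g k) (app J (g i) (word J g l psi)) j"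
    by (simp add: eq_neg_iff_add_eq_0)
qed

lemma hh:
  assumes "k < r" shows "app J (h k) (app J (h k) psi) = psi"
proof -
  have "app J (h k) (app J (h k) psi) = app J (h k) (app J (g k) psi)" by (simp add: gh)
  also have "\<dots> = app J (g k) (app J (h k) psi)" by (simp add: comm)
  also have "\<dots> = app J (g k) (app J (g k) psi)" by (simp add: gh)
  also have "\<dots> = psi" using gg_word[OF assms, of "[]"] by simp
  finally show ?thesis .
qed

lemma sign_word:
  assumes "k < r" "set w \<subseteq> {..<r}" "set l \<subseteq> {..<r}"
  shows "app J (g k) (word J g w (word J g l psi))
       = (\<lambda>j. (-1) ^ (length w + count_list w k) * word J g w (app J (g k) (word J g l psi)) j)"
  using assms(2)
proof (induction w)
  case Nil then show ?case by simp
next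
  case (Cons i w)
  let ?Y = "word J g w (word J g l psi)"
  let ?s = "(-1::complex) ^ (length w + count_list w k)"
  have iH: "app J (g k) ?Y = (\<lambda>j. ?s * word J g w (app J (g k) (word J g l psi)) j)"
    using Cons by simp
  have Yw: "?Y = word J g (w @ l) psi" by (simp add: word_append)
  have ir: "i < r" using Cons.prems by simp
  show ?case
  proof (cases "i = k")
    case False
    have "app J (g k) (word J g (i # w) (word J g l psi)) = app J (g k) (app J (g i) ?Y)" by simp
    also have "\<dots> = (\<lambda>j. - app J (g i) (app J (g k) ?Y) j)"
      using anti_word_ne[OF assms(1) ir, of "w @ l"] False Yw by simp
    also have "\<dots> = (\<lambda>j. - (?s * app J (g i) (word J g w (app J (g k) (word J g l psi))) j))"
      by (simp add: iH app_scale)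
    also have "\<dots> = (\<lambda>j. (-1) ^ (length (i # w) + count_list (i # w) k) *
                        word J g (i # w) (app J (g k) (word J g l psi)) j)"
      using False by simp
    finally show ?thesis .
  next
    case True
    have e2: "word J g w (app J (g k) (word J g l psi)) = (\<lambda>j. ?s * app J (g k) ?Y j)"
    proof
      fix j
      have "?s * ?s = 1" by (simp add: power_add[symmetric] mult_2[symmetric])
      then show "word J g w (app J (g k) (word J g l psi)) j = ?s * app J (g k) ?Y j"
        using fun_cong[OF iH, of j] by (simp add: mult.assoc[symmetric])
    qed
    have "(\<lambda>j. (-1) ^ (length (i # w) + count_list (i # w) k) *
                        word J g (i # w) (app J (g k) (word J g l psi)) j)
        = (\<lambda>j. ?s * app J (g k) (\<lambda>j. ?s * app J (g k) ?Y j) j)"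
      using True by (simp add: e2)
    also have "\<dots> = (\<lambda>j. (?s * ?s) * app J (g k) (app J (g k) ?Y) j)"
      by (simp add: app_scale mult.assoc)
    also have "?s * ?s = 1" by (simp add: power_add[symmetric] mult_2[symmetric])
    finally show ?thesis using True by simp
  qed
qed

end

context cliff begin

lemma f_odd:
  assumes k: "k < r" and w: "set w \<subseteq> {..<r}" and odd: "odd (length w + count_list w k)"
  shows "ip J psi (word J g w psi) = 0"
proof -
  let ?X = "app J (g k) psi"
  have X: "?X = word J g [k] psi" by simp
  have s1: "app J (g k) (word J g w ?X) = (\<lambda>j. - word J g w psi j)"
  proof -
    have "app J (g k) (word J g w (word J g [k] psi))
       = (\<lambda>j. (-1) ^ (length w + count_list w k) * word J g w (app J (g k) (word J g [k] psi)) j)"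
      by (rule sign_word[OF k w]) (use k in simp)
    also have "app J (g k) (word J g [k] psi) = psi" using gg_word[OF k, of "[]"] by simp
    finally show ?thesis using odd by simp
  qed
  have "ip J psi (word J g w psi) = - ip J psi (app J (g k) (word J g w ?X))"
    by (simp add: s1 ip_scale_right[of J psi "-1", simplified])
  also have "ip J psi (app J (g k) (word J g w ?X)) = ip J ?X (word J g w ?X)"
    by (simp add: ip_app_herm[OF herm_g])
  also have "\<dots> = ip J (app J (h k) psi) (word J g w (app J (h k) psi))" by (simp add: gh)
  also have "\<dots> = ip J (app J (h k) psi) (app J (h k) (word J g w psi))" by (simp add: comm_word2)
  also have "\<dots> = ip J psi (app J (h k) (app J (h k) (word J g w psi)))" by (simp add: ip_app_herm[OF herm_h])
  also have "app J (h k) (app J (h k) (word J g w psi)) = word J g w psi"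
    by (simp add: comm_word2[symmetric] hh[OF k])
  finally have "ip J psi (word J g w psi) = - ip J psi (word J g w psi)" .
  then show ?thesis by simp
qed

lemma word_norm:
  assumes "set l \<subseteq> {..<r}" shows "ip J (word J g l psi) (word J g l psi) = 1"
  using assms
proof (induction l)
  case Nil then show ?case by (simp add: psi_norm)
next
  case (Cons i l)
  have ir: "i < r" using Cons.prems by simp
  have "ip J (word J g (i # l) psi) (word J g (i # l) psi)
      = ip J (word J g l psi) (app J (g i) (app J (g i) (word J g l psi)))"
    by (simp add: ip_app_herm[OF herm_g])
  also have "\<dots> = ip J (word J g l psi) (word J g l psi)" by (simp add: gg_word[OF ir])
  finally show ?case using Cons by simp
qed

definition vS :: "nat set \<Rightarrow> 'j \<Rightarrow> complex" where
  "vS S = word J g (sorted_list_of_set S) psi"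

lemma vS_orth:
  assumes m: "2 * m \<le> r" and S: "S \<subseteq> {..<2*m}" and T: "T \<subseteq> {..<2*m}"
  shows "ip J (vS S) (vS T) = (if S = T then 1 else 0)"
proof -
  have finS: "finite S" and finT: "finite T" using S T finite_subset by auto
  let ?lS = "sorted_list_of_set S" and ?lT = "sorted_list_of_set T"
  have setS: "set ?lS = S" and setT: "set ?lT = T" using finS finT by auto
  have dS: "distinct ?lS" and dT: "distinct ?lT" by auto
  have lS: "set ?lS \<subseteq> {..<r}" and lT: "set ?lT \<subseteq> {..<r}" using setS setT S T m by auto
  show ?thesis
  proof (cases "S = T")
    case True then show ?thesis using word_norm[OF lS] by (simp add: vS_def)
  next
    case False
    have ipw: "ip J (vS S) (vS T) = ip J psi (word J g (rev ?lS @ ?lT) psi)"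
      unfolding vS_def by (simp add: ip_word_herm[OF herm_g] word_append)
    have cnt: "count_list (rev ?lS @ ?lT) k = (if k \<in> S then 1 else 0) + (if k \<in> T then 1 else 0)" for k
      using count_distinct[OF dS, of k] count_distinct[OF dT, of k] setS setT by simp
    have len: "length (rev ?lS @ ?lT) = card S + card T" by simp
    have wr: "set (rev ?lS @ ?lT) \<subseteq> {..<r}" using lS lT by auto
    obtain k where k: "k < 2 * m" and oddk: "odd (card S + card T + (if k \<in> S then 1 else 0) + (if k \<in> T then 1 else 0))"
    proof (cases "even (card S + card T)")
      case True
      obtain k where "k \<in> S \<and> k \<notin> T \<or> k \<in> T \<and> k \<notin> S" using False by blast
      moreover then have "k < 2 * m" using S T by auto
      ultimately show ?thesis using that True by auto
    next
      case odd: False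
      have "\<exists>k<2*m. (k \<in> S) = (k \<in> T)"
      proof (rule ccontr)
        assume "\<not> ?thesis"
        then have all: "\<forall>k<2*m. (k \<in> S) \<noteq> (k \<in> T)" by blast
        then have "S \<inter> T = {}" using S by auto
        moreover have "S \<union> T = {..<2*m}" using all S T by auto
        ultimately have "card S + card T = 2 * m" using card_Un_disjoint[OF finS finT] by simp
        then show False using odd by simp
      qed
      then obtain k where "k < 2 * m" "(k \<in> S) = (k \<in> T)" by blast
      then show ?thesis using that odd by auto
    qed
    have "k < r" using k m by simp
    moreover have "odd (length (rev ?lS @ ?lT) + count_list (rev ?lS @ ?lT) k)"
      unfolding cnt len using oddk by (metis add.assoc)
    ultimately have "ip J psi (word J g (rev ?lS @ ?lT) psi) = 0" using f_odd wr by blast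
    then show ?thesis using ipw False by simp
  qed
qed

theorem cliff_bound:
  assumes m: "2 * m \<le> r" shows "4 ^ m \<le> card J"
proof -
  have "card (Pow {..<2*m}) \<le> card J"
    by (rule bessel[OF finJ, of "Pow {..<2*m}" vS]) (use vS_orth[OF m] in auto)
  then show ?thesis by (simp add: card_Pow power_mult)
qed

end

lemma sym_dot:
  fixes C :: "real^'n^'n"
  assumes "transpose C = C" shows "u \<bullet> (C *v w) = (C *v u) \<bullet> w"
  by (metis assms dot_lmul_matrix transpose_matrix_vector)

lemma quad_expand:
  fixes C :: "real^'n^'n"
  shows "(w + t *\<^sub>R u) \<bullet> (C *v (w + t *\<^sub>R u)) =
    w \<bullet> (C *v w) + t * (w \<bullet> (C *v u)) + t * (u \<bullet> (C *v w)) + t\<^sup>2 * (u \<bullet> (C *v u))"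
  by (simp add: matrix_vector_right_distrib matrix_vector_mult_scaleR inner_add_left inner_add_right
      power2_eq_square algebra_simps)

lemma psd_zero:
  fixes C :: "real^'n^'n"
  assumes psd: "real_psd C" and z: "w \<bullet> (C *v w) = 0"
  shows "C *v w = 0"
proof -
  have sym: "transpose C = C" and pos: "\<And>v. 0 \<le> v \<bullet> (C *v v)" using psd by (auto simp: real_psd_def)
  define u where "u = C *v w"
  define q where "q = u \<bullet> u"
  define b where "b = u \<bullet> (C *v u)"
  have b0: "0 \<le> b" using pos by (simp add: b_def)
  have q0: "0 \<le> q" by (simp add: q_def)
  have e1: "w \<bullet> (C *v u) = q" unfolding q_def u_def using sym_dot[OF sym] by (metis inner_commute)
  have e2: "u \<bullet> (C *v w) = q" unfolding q_def u_def by simp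
  define t where "t = - q / (b + 1)"
  have "0 \<le> (w + t *\<^sub>R u) \<bullet> (C *v (w + t *\<^sub>R u))" by (rule pos)
  also have "\<dots> = 2 * t * q + t\<^sup>2 * b" unfolding quad_expand z e1 e2 b_def by simp
  finally have h: "0 \<le> 2 * t * q + t\<^sup>2 * b" .
  have "0 \<le> (2 * t * q + t\<^sup>2 * b) * (b + 1)\<^sup>2" using h b0 by simp
  also have "\<dots> = 2*q*(t*(b+1))*(b+1) + b*(t*(b+1))\<^sup>2" by (simp add: power2_eq_square algebra_simps)
  also have "t*(b+1) = -q" using b0 unfolding t_def by simp
  also have "2*q*(-q)*(b+1) + b*(-q)\<^sup>2 = - q\<^sup>2 * (b + 2)" by (simp add: power2_eq_square algebra_simps)
  finally have "q\<^sup>2 * (b + 2) \<le> 0" by simp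
  then have "q = 0" using b0 by (smt (verit) mult_pos_pos zero_less_power2)
  then show ?thesis unfolding q_def u_def by simp
qed

lemma gram_schmidt:
  fixes C :: "real^'n^'n"
  assumes psd: "real_psd C"
  shows "k \<le> rank C \<Longrightarrow> \<exists>cs. \<forall>i<k. \<forall>j<k. cs i \<bullet> (C *v cs j) = (if i = j then 1 else 0)"
proof (induction k)
  case 0 then show ?case by auto
next
  case (Suc k)
  have sym: "transpose C = C" and pos: "\<And>v. 0 \<le> v \<bullet> (C *v v)" using psd by (auto simp: real_psd_def)
  from Suc obtain cs where cs: "\<forall>i<k. \<forall>j<k. cs i \<bullet> (C *v cs j) = (if i = j then 1 else 0)" by auto
  let ?V = "(\<lambda>i. C *v cs i) ` {..<k}"
  have "\<not> range (\<lambda>x. C *v x) \<subseteq> span ?V"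
  proof
    assume "range (\<lambda>x. C *v x) \<subseteq> span ?V"
    then have "dim (range (\<lambda>x. C *v x)) \<le> card ?V" by (intro dim_le_card) auto
    also have "\<dots> \<le> k" using card_image_le[of "{..<k}"] by simp
    finally show False using Suc.prems by (simp add: rank_dim_range)
  qed
  then obtain v where v: "C *v v \<notin> span ?V" by auto
  define t where "t i = cs i \<bullet> (C *v v)" for i
  define w where "w = v - (\<Sum>i<k. t i *\<^sub>R cs i)"
  have Cw: "C *v w = C *v v - (\<Sum>i<k. t i *\<^sub>R (C *v cs i))"
    unfolding w_def by (simp add: matrix_vector_mult_diff_distrib linear_sum[OF matrix_vector_mul_linear] matrix_vector_mult_scaleR)
  have "(\<Sum>i<k. t i *\<^sub>R (C *v cs i)) \<in> span ?V"
    by (intro span_sum span_scale span_base) auto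
  then have Cw0: "C *v w \<noteq> 0" using v unfolding Cw
    by (metis eq_iff_diff_eq_0 span_diff span_sum span_scale) 
  have orth: "cs j \<bullet> (C *v w) = 0" if "j < k" for j
  proof -
    have "cs j \<bullet> (C *v w) = t j - (\<Sum>i<k. t i * (cs j \<bullet> (C *v cs i)))"
      unfolding Cw by (simp add: inner_diff_right inner_sum_right t_def)
    also have "(\<Sum>i<k. t i * (cs j \<bullet> (C *v cs i))) = (\<Sum>i<k. if i = j then t i else 0)"
      using cs that by (intro sum.cong) auto
    also have "\<dots> = t j" using that by simp
    finally show ?thesis by simp
  qed
  define s where "s = w \<bullet> (C *v w)"
  have s0: "0 < s" using psd_zero[OF psd, of w] pos[of w] Cw0 unfolding s_def by force
  define cs' where "cs' = cs(k := (1 / sqrt s) *\<^sub>R w)"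
  have ok: "cs' i \<bullet> (C *v cs' j) = (if i = j then 1 else 0)" if "i < Suc k" "j < Suc k" for i j
  proof (cases "i = k"; cases "j = k")
    assume "i = k" "j = k" then show ?thesis
      using s0 by (simp add: cs'_def matrix_vector_mult_scaleR s_def[symmetric] real_sqrt_mult[symmetric])
  next
    assume "i = k" "j \<noteq> k"
    then have "j < k" using that by simp
    have "w \<bullet> (C *v cs j) = cs j \<bullet> (C *v w)" using sym_dot[OF sym] by (metis inner_commute)
    then show ?thesis using \<open>i = k\<close> \<open>j \<noteq> k\<close> orth[OF \<open>j < k\<close>] by (simp add: cs'_def)
  next
    assume "i \<noteq> k" "j = k"
    then have "i < k" using that by simp
    then show ?thesis using \<open>i \<noteq> k\<close> \<open>j = k\<close> orth[OF \<open>i < k\<close>]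
      by (simp add: cs'_def matrix_vector_mult_scaleR)
  next
    assume "i \<noteq> k" "j \<noteq> k"
    then show ?thesis using cs that by (simp add: cs'_def)
  qed
  then show ?case by blast
qed

lemma smult_mv: "((k::real) *\<^sub>R A) *v x = k *\<^sub>R (A *v (x::real^'n))"
  by (vector matrix_vector_mult_def sum_distrib_left mult.assoc)

lemma transpose_add': "transpose (A + B) = transpose A + transpose (B::real^'n^'n)"
  by (simp add: transpose_def vec_eq_iff)

lemma decomp:
  fixes C :: "real^'n^'n"
  assumes psd: "real_psd C"
    and cs: "\<forall>i<rank C. \<forall>j<rank C. cs i \<bullet> (C *v cs j) = (if i = j then 1 else 0)"
  shows "C *v v = (\<Sum>i<rank C. (cs i \<bullet> (C *v v)) *\<^sub>R (C *v cs i))"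
proof -
  let ?r = "rank C"
  have sym: "transpose C = C" using psd by (auto simp: real_psd_def)
  let ?V = "(\<lambda>i. C *v cs i) ` {..<?r}"
  have inj: "inj_on (\<lambda>i. C *v cs i) {..<?r}"
  proof (rule inj_onI)
    fix i j assume ij: "i \<in> {..<?r}" "j \<in> {..<?r}" "C *v cs i = C *v cs j"
    then have "cs i \<bullet> (C *v cs i) = cs i \<bullet> (C *v cs j)" by simp
    show "i = j"
    proof (rule ccontr)
      assume "i \<noteq> j"
      then have "cs i \<bullet> (C *v cs i) = 1" "cs i \<bullet> (C *v cs j) = 0" using cs ij(1,2) by auto
      with \<open>cs i \<bullet> (C *v cs i) = cs i \<bullet> (C *v cs j)\<close> show False by simp
    qed
  qed
  have indep: "independent ?V"
  proof (rule independent_if_scalars_zero)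
    show "finite ?V" by simp
  next
    fix f x assume sum0: "(\<Sum>x\<in>?V. f x *\<^sub>R x) = 0" and xV: "x \<in> ?V"
    then obtain j where j: "j < ?r" "x = C *v cs j" by auto
    have "(\<Sum>i<?r. f (C *v cs i) *\<^sub>R (C *v cs i)) = 0"
      using sum0 by (simp add: sum.reindex[OF inj])
    then have "cs j \<bullet> (\<Sum>i<?r. f (C *v cs i) *\<^sub>R (C *v cs i)) = 0" by simp
    then have "(\<Sum>i<?r. f (C *v cs i) * (cs j \<bullet> (C *v cs i))) = 0"
      by (simp add: inner_sum_right)
    also have "(\<Sum>i<?r. f (C *v cs i) * (cs j \<bullet> (C *v cs i))) = (\<Sum>i<?r. if i = j then f (C *v cs i) else 0)"
      using cs j by (intro sum.cong) auto
    also have "\<dots> = f (C *v cs j)" using j by simp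
    finally show "f x = 0" using j by simp
  qed
  have "card ?V = ?r" using card_image[OF inj] by simp
  then have "range (\<lambda>x. C *v x) \<subseteq> span ?V"
    by (intro card_ge_dim_independent indep) (auto simp: rank_dim_range)
  then have "C *v v \<in> span ?V" by auto
  then obtain mu where mu: "C *v v = (\<Sum>x\<in>?V. mu x *\<^sub>R x)" by (auto simp: span_finite)
  then have mu2: "C *v v = (\<Sum>i<?r. mu (C *v cs i) *\<^sub>R (C *v cs i))" by (simp add: sum.reindex[OF inj])
  have "cs j \<bullet> (C *v v) = mu (C *v cs j)" if "j < ?r" for j
  proof -
    have "cs j \<bullet> (C *v v) = (\<Sum>i<?r. mu (C *v cs i) * (cs j \<bullet> (C *v cs i)))"
      by (subst mu2) (simp add: inner_sum_right)
    also have "\<dots> = (\<Sum>i<?r. if i = j then mu (C *v cs i) else 0)"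
      using cs that by (intro sum.cong) auto
    finally show ?thesis using that by simp
  qed
  then show ?thesis by (subst mu2) (auto intro!: sum.cong)
qed

lemma ext_lemma:
  fixes C S :: "real^'n^'n"
  assumes ext: "C extreme_point_of elliptope" and symS: "transpose S = S"
    and diag: "\<forall>i. S$i$i = 0" and ker: "\<forall>c. C *v c = 0 \<longrightarrow> S *v c = 0"
  shows "S = 0"
proof (rule ccontr)
  assume Snz: "S \<noteq> 0"
  have Cell: "C \<in> elliptope" using ext by (simp add: extreme_point_of_def)
  then have psd: "real_psd C" and dC: "\<forall>i. C$i$i = 1" by (auto simp: elliptope_def)
  have sym: "transpose C = C" using psd by (auto simp: real_psd_def)
  let ?r = "rank C"
  obtain cs where cs: "\<forall>i<?r. \<forall>j<?r. cs i \<bullet> (C *v cs j) = (if i = j then 1 else 0)"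
    using gram_schmidt[OF psd, of ?r] by auto
  define t where "t v i = cs i \<bullet> (C *v v)" for v i
  have Cv: "C *v v = (\<Sum>i<?r. t v i *\<^sub>R (C *v cs i))" for v
    using decomp[OF psd cs] by (simp add: t_def)
  have Sv: "S *v v = (\<Sum>i<?r. t v i *\<^sub>R (S *v cs i))" for v
  proof -
    have "C *v (v - (\<Sum>i<?r. t v i *\<^sub>R cs i)) = 0"
      by (simp add: matrix_vector_mult_diff_distrib linear_sum[OF matrix_vector_mul_linear]
          matrix_vector_mult_scaleR Cv[of v])
    then have "S *v (v - (\<Sum>i<?r. t v i *\<^sub>R cs i)) = 0" using ker by blast
    then show ?thesis
      by (simp add: matrix_vector_mult_diff_distrib linear_sum[OF matrix_vector_mul_linear]
          matrix_vector_mult_scaleR)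
  qed
  have vCv: "v \<bullet> (C *v v) = (\<Sum>i<?r. (t v i)\<^sup>2)" for v
  proof -
    have "v \<bullet> (C *v v) = v \<bullet> (\<Sum>i<?r. t v i *\<^sub>R (C *v cs i))" by (simp only: Cv[of v])
    also have "\<dots> = (\<Sum>i<?r. t v i * (v \<bullet> (C *v cs i)))"
      by (simp add: inner_sum_right)
    also have "\<dots> = (\<Sum>i<?r. t v i * t v i)"
      using sym_dot[OF sym] by (intro sum.cong) (auto simp: t_def inner_commute)
    finally show ?thesis by (simp add: power2_eq_square)
  qed
  define sg where "sg i j = (S *v cs j) \<bullet> cs i" for i j
  define K where "K = (\<Sum>i<?r. \<Sum>j<?r. \<bar>sg i j\<bar>)"
  have K0: "0 \<le> K" unfolding K_def by (intro sum_nonneg) auto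
  have vSv: "\<bar>v \<bullet> (S *v v)\<bar> \<le> K * (v \<bullet> (C *v v))" for v
  proof -
    have "v \<bullet> (S *v v) = v \<bullet> (\<Sum>i<?r. t v i *\<^sub>R (S *v cs i))" by (simp only: Sv[of v])
    also have "\<dots> = (\<Sum>i<?r. t v i * (v \<bullet> (S *v cs i)))"
      by (simp add: inner_sum_right)
    also have "\<dots> = (\<Sum>i<?r. t v i * ((S *v v) \<bullet> cs i))"
      using sym_dot[OF symS] by (intro sum.cong) (auto simp: inner_commute)
    also have "\<dots> = (\<Sum>i<?r. t v i * ((\<Sum>j<?r. t v j *\<^sub>R (S *v cs j)) \<bullet> cs i))"
      by (simp only: Sv[of v])
    also have "\<dots> = (\<Sum>i<?r. \<Sum>j<?r. t v i * t v j * sg i j)"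
      by (simp add: inner_sum_left sum_distrib_left sg_def algebra_simps)
    finally have eq: "v \<bullet> (S *v v) = (\<Sum>i<?r. \<Sum>j<?r. t v i * t v j * sg i j)" .
    define Q where "Q = (\<Sum>k<?r. (t v k)\<^sup>2)"
    have tt: "\<bar>t v i * t v j\<bar> \<le> Q" if "i < ?r" "j < ?r" for i j
    proof -
      have "(t v i)\<^sup>2 \<le> Q" "(t v j)\<^sup>2 \<le> Q" unfolding Q_def
        using that by (auto intro!: member_le_sum)
      moreover have "\<bar>t v i * t v j\<bar> \<le> ((t v i)\<^sup>2 + (t v j)\<^sup>2) / 2"
      proof -
        have "0 \<le> (\<bar>t v i\<bar> - \<bar>t v j\<bar>)\<^sup>2" by simp
        then show ?thesis by (simp add: power2_diff abs_mult power2_abs)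
      qed
      moreover have "((t v i)\<^sup>2 + (t v j)\<^sup>2) / 2 \<le> Q" using calculation(1,2) by simp
      ultimately show ?thesis by (meson order_trans)
    qed
    have "\<bar>v \<bullet> (S *v v)\<bar> \<le> (\<Sum>i<?r. \<Sum>j<?r. \<bar>t v i * t v j * sg i j\<bar>)"
      unfolding eq by (rule order_trans[OF sum_abs]) (intro sum_mono sum_abs)
    also have "\<dots> \<le> (\<Sum>i<?r. \<Sum>j<?r. Q * \<bar>sg i j\<bar>)"
      using tt by (intro sum_mono) (auto simp: abs_mult intro: mult_right_mono)
    also have "\<dots> = K * Q" by (simp add: K_def sum_distrib_left mult.commute)
    finally show ?thesis using vCv Q_def by simp
  qed
  define e where "e = 1 / (K + 1)"
  have e0: "0 < e" using K0 by (simp add: e_def)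
  have eK: "e * K \<le> 1" using K0 by (simp add: e_def field_simps)
  have inell: "C + s *\<^sub>R S \<in> elliptope" if "\<bar>s\<bar> \<le> e" for s
  proof -
    have "0 \<le> v \<bullet> ((C + s *\<^sub>R S) *v v)" for v
    proof -
      have c0: "0 \<le> v \<bullet> (C *v v)" using psd by (simp add: real_psd_def)
      have "\<bar>s * (v \<bullet> (S *v v))\<bar> \<le> e * (K * (v \<bullet> (C *v v)))"
        unfolding abs_mult using that vSv[of v] e0 by (intro mult_mono) auto
      also have "\<dots> \<le> v \<bullet> (C *v v)" using eK c0
      proof -
        have "(e * K) * (v \<bullet> (C *v v)) \<le> v \<bullet> (C *v v)"
          by (rule mult_left_le_one_le[OF c0 _ eK]) (use K0 e0 in simp)
        then show ?thesis by (simp add: mult.assoc)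
      qed
      finally show ?thesis
        by (simp add: matrix_vector_mult_add_rdistrib smult_mv inner_add_right)
    qed
    moreover have "transpose (C + s *\<^sub>R S) = C + s *\<^sub>R S"
      by (simp add: transpose_add' transpose_scalar sym symS)
    ultimately show ?thesis using dC diag by (simp add: elliptope_def real_psd_def)
  qed
  have a: "C + (-e) *\<^sub>R S \<in> elliptope" and b: "C + e *\<^sub>R S \<in> elliptope"
    using inell[of "-e"] inell[of e] e0 by auto
  have mid: "midpoint (C + (-e) *\<^sub>R S) (C + e *\<^sub>R S) = C"
  proof -
    have "(C + (-e) *\<^sub>R S) + (C + e *\<^sub>R S) = 2 *\<^sub>R C" by (simp add: scaleR_2)
    then show ?thesis by (simp add: midpoint_def)
  qed
  have ne: "C + (-e) *\<^sub>R S \<noteq> C + e *\<^sub>R S"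
  proof
    assume "C + (-e) *\<^sub>R S = C + e *\<^sub>R S"
    then have "(2 * e) *\<^sub>R S = 0" by (simp add: algebra_simps scaleR_left_distrib[symmetric])
    then show False using Snz e0 by simp
  qed
  have "C \<in> open_segment (C + (-e) *\<^sub>R S) (C + e *\<^sub>R S)"
    using midpoint_in_open_segment[of "C + (-e) *\<^sub>R S" "C + e *\<^sub>R S"] ne mid by metis
  then show False using ext a b by (auto simp: extreme_point_of_def)
qed

definition lc :: "('n::finite \<Rightarrow> 'j \<Rightarrow> 'j \<Rightarrow> complex) \<Rightarrow> real^'n \<Rightarrow> 'j \<Rightarrow> 'j \<Rightarrow> complex" where
  "lc a c = (\<lambda>i k. \<Sum>x\<in>UNIV. complex_of_real (c$x) * a x i k)"

lemma app_lc: "app J (lc a c) v = (\<lambda>j. \<Sum>x\<in>UNIV. complex_of_real (c$x) * app J (a x) v j)"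
proof
  fix j show "app J (lc a c) v j = (\<Sum>x\<in>UNIV. complex_of_real (c$x) * app J (a x) v j)"
    by (cases "j \<in> J") (simp_all add: app_def lc_def sum_distrib_left sum_distrib_right mult.assoc,
        rule sum.swap)
qed

lemma app_lc_lc: "app J (lc a c) (app J (lc b e) v) =
  (\<lambda>j. \<Sum>x\<in>UNIV. \<Sum>y\<in>UNIV. complex_of_real (c$x) * complex_of_real (e$y) * app J (a x) (app J (b y) v) j)"
proof -
  have "app J (lc a c) (app J (lc b e) v) = app J (lc a c) (\<lambda>j. \<Sum>y\<in>UNIV. complex_of_real (e$y) * app J (b y) v j)"
    by (simp only: app_lc)
  also have "\<dots> = (\<lambda>j. \<Sum>y\<in>UNIV. app J (lc a c) (\<lambda>j. complex_of_real (e$y) * app J (b y) v j) j)"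
    by (rule app_sum)
  also have "\<dots> = (\<lambda>j. \<Sum>y\<in>UNIV. complex_of_real (e$y) * app J (lc a c) (app J (b y) v) j)"
    by (simp only: app_scale)
  also have "\<dots> = (\<lambda>j. \<Sum>y\<in>UNIV. complex_of_real (e$y) * (\<Sum>x\<in>UNIV. complex_of_real (c$x) * app J (a x) (app J (b y) v) j))"
    by (simp only: app_lc)
  also have "\<dots> = (\<lambda>j. \<Sum>y\<in>UNIV. \<Sum>x\<in>UNIV. complex_of_real (c$x) * complex_of_real (e$y) * app J (a x) (app J (b y) v) j)"
    by (simp add: sum_distrib_left mult.left_commute mult.assoc)
  also have "\<dots> = (\<lambda>j. \<Sum>x\<in>UNIV. \<Sum>y\<in>UNIV. complex_of_real (c$x) * complex_of_real (e$y) * app J (a x) (app J (b y) v) j)"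
    by (intro ext) (rule sum.swap)
  finally show ?thesis .
qed

lemma herm_lc: assumes "\<And>x. herm J (a x)" shows "herm J (lc a c)"
  unfolding herm_def lc_def
proof (intro ballI)
  fix i k assume "i \<in> J" "k \<in> J"
  then have "\<And>x. a x k i = cnj (a x i k)" using assms unfolding herm_def by blast
  then show "(\<Sum>x\<in>UNIV. complex_of_real (c $ x) * a x k i) = cnj (\<Sum>x\<in>UNIV. complex_of_real (c $ x) * a x i k)"
    by (simp add: cnj_sum)
qed

lemma inner_mv: "(c::real^'n) \<bullet> (C *v e) = (\<Sum>x\<in>UNIV. \<Sum>y\<in>UNIV. c$x * e$y * C$x$y)"
  by (simp add: inner_vec_def matrix_vector_mult_def sum_distrib_left mult.commute mult.left_commute)

locale tsir =
  fixes J :: "'j set" and psi :: "'j \<Rightarrow> complex" and a b :: "'n::finite \<Rightarrow> 'j \<Rightarrow> 'j \<Rightarrow> complex"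
    and C :: "real^'n^'n"
  assumes finJ: "finite J"
    and psi_Sp: "psi \<in> Sp J"
    and psi_norm: "ip J psi psi = 1"
    and herm_a: "\<And>x. herm J (a x)" and herm_b: "\<And>x. herm J (b x)"
    and contr_a: "\<And>x v. Re (ip J (app J (a x) v) (app J (a x) v)) \<le> Re (ip J v v)"
    and contr_b: "\<And>x v. Re (ip J (app J (b x) v) (app J (b x) v)) \<le> Re (ip J v v)"
    and comm: "\<And>x y v. app J (a x) (app J (b y) v) = app J (b y) (app J (a x) v)"
    and corr: "\<And>x y. complex_of_real (C$x$y) = ip J psi (app J (a x) (app J (b y) psi))"
    and extC: "C extreme_point_of elliptope"
begin

lemma Cell: "C \<in> elliptope" using extC by (simp add: extreme_point_of_def)
lemma Cpsd: "real_psd C" using Cell by (simp add: elliptope_def)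
lemma Cdiag: "C$x$x = 1" using Cell by (simp add: elliptope_def)
lemma Csym: "C$y$x = C$x$y"
proof -
  have "transpose C = C" using Cpsd by (simp add: real_psd_def)
  then show ?thesis by (metis transpose_def vec_lambda_beta)
qed

lemma Sp_diff: "v \<in> Sp J \<Longrightarrow> w \<in> Sp J \<Longrightarrow> (\<lambda>j. v j - w j) \<in> Sp J"
  by (simp add: Sp_def)

lemma eq_by_norm:
  assumes "v \<in> Sp J" "w \<in> Sp J" "Re (ip J v v) \<le> 1" "Re (ip J w w) \<le> 1" "ip J v w = 1"
  shows "v = w"
proof -
  have wv: "ip J w v = 1" using assms(5) ip_cnj[of J v w] by simp
  have "ip J (\<lambda>j. v j - w j) (\<lambda>j. v j - w j) = ip J v v - ip J v w - (ip J w v - ip J w w)"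
    by (simp add: ip_diff_left ip_diff_right)
  then have "Re (ip J (\<lambda>j. v j - w j) (\<lambda>j. v j - w j)) = Re (ip J v v) + Re (ip J w w) - 2"
    using assms(5) wv by simp
  then have "Re (ip J (\<lambda>j. v j - w j) (\<lambda>j. v j - w j)) = 0"
    using assms(3,4) ip_self_ge0[of J "\<lambda>j. v j - w j"] by linarith
  then have "(\<lambda>j. v j - w j) = (\<lambda>j. 0)" using ip_self_zero[OF finJ Sp_diff[OF assms(1,2)]] by blast
  then show ?thesis by (metis (no_types) eq_iff_diff_eq_0 ext fun_cong)
qed

lemma ab_psi: "app J (a x) psi = app J (b x) psi"
proof (rule eq_by_norm)
  show "app J (a x) psi \<in> Sp J" "app J (b x) psi \<in> Sp J" by (rule app_Sp)+
  show "Re (ip J (app J (a x) psi) (app J (a x) psi)) \<le> 1" using contr_a[of x psi] psi_norm by simp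
  show "Re (ip J (app J (b x) psi) (app J (b x) psi)) \<le> 1" using contr_b[of x psi] psi_norm by simp
  have "ip J (app J (a x) psi) (app J (b x) psi) = ip J psi (app J (a x) (app J (b x) psi))"
    by (simp add: ip_app_herm[OF herm_a])
  also have "\<dots> = 1" using corr[of x x] Cdiag by simp
  finally show "ip J (app J (a x) psi) (app J (b x) psi) = 1" .
qed

lemma ab_lc: "app J (lc a c) psi = app J (lc b c) psi"
  by (simp add: app_lc ab_psi)

lemma comm_lc1: "app J (lc a c) (app J (b y) v) = app J (b y) (app J (lc a c) v)"
  by (simp add: app_lc app_sum app_scale comm)

lemma comm_lc: "app J (lc a c) (app J (lc b e) v) = app J (lc b e) (app J (lc a c) v)"
proof -
  have "app J (lc a c) (app J (lc b e) v) = (\<lambda>j. \<Sum>x\<in>UNIV. \<Sum>y\<in>UNIV. complex_of_real (c$x) * complex_of_real (e$y) * app J (a x) (app J (b y) v) j)"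
    by (rule app_lc_lc)
  also have "\<dots> = (\<lambda>j. \<Sum>y\<in>UNIV. \<Sum>x\<in>UNIV. complex_of_real (c$x) * complex_of_real (e$y) * app J (a x) (app J (b y) v) j)"
    by (intro ext) (rule sum.swap)
  also have "\<dots> = (\<lambda>j. \<Sum>y\<in>UNIV. \<Sum>x\<in>UNIV. complex_of_real (e$y) * complex_of_real (c$x) * app J (b y) (app J (a x) v) j)"
    by (simp add: comm mult.commute)
  also have "\<dots> = app J (lc b e) (app J (lc a c) v)" by (rule app_lc_lc[symmetric])
  finally show ?thesis .
qed

lemma corr_lc: "ip J psi (app J (lc a c) (app J (lc b e) psi)) = complex_of_real (c \<bullet> (C *v e))"
proof -
  have "app J (lc a c) (app J (lc b e) psi)
      = (\<lambda>j. \<Sum>x\<in>UNIV. \<Sum>y\<in>UNIV. complex_of_real (c$x) * complex_of_real (e$y) * app J (a x) (app J (b y) psi) j)"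
    by (rule app_lc_lc)
  then have "ip J psi (app J (lc a c) (app J (lc b e) psi))
      = (\<Sum>x\<in>UNIV. \<Sum>y\<in>UNIV. complex_of_real (c$x) * complex_of_real (e$y) * ip J psi (app J (a x) (app J (b y) psi)))"
    by (simp add: ip_sum_right ip_scale_right)
  also have "\<dots> = (\<Sum>x\<in>UNIV. \<Sum>y\<in>UNIV. complex_of_real (c$x * e$y * C$x$y))"
    by (simp add: corr[symmetric])
  also have "\<dots> = complex_of_real (c \<bullet> (C *v e))" by (simp add: inner_mv)
  finally show ?thesis .
qed

lemma norm_lc: "ip J (app J (lc a c) psi) (app J (lc a e) psi) = complex_of_real (c \<bullet> (C *v e))"
proof -
  have "ip J (app J (lc a c) psi) (app J (lc a e) psi) = ip J (app J (lc a c) psi) (app J (lc b e) psi)"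
    by (simp add: ab_lc)
  also have "\<dots> = ip J psi (app J (lc a c) (app J (lc b e) psi))"
    by (simp add: ip_app_herm[OF herm_lc[OF herm_a]])
  finally show ?thesis by (simp add: corr_lc)
qed

lemma null_lc: assumes "C *v c = 0" shows "app J (lc a c) psi = (\<lambda>j. 0)"
proof -
  have "Re (ip J (app J (lc a c) psi) (app J (lc a c) psi)) = 0" using norm_lc[of c c] assms by simp
  then show ?thesis using ip_self_zero[OF finJ app_Sp] by blast
qed

lemma aa_psi: "app J (a x) (app J (a x) psi) = psi"
proof (rule eq_by_norm)
  show "app J (a x) (app J (a x) psi) \<in> Sp J" by (rule app_Sp)
  show "psi \<in> Sp J" by (rule psi_Sp)
  have n1: "ip J (app J (a x) psi) (app J (a x) psi) = 1"
  proof -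
    have "ip J (app J (a x) psi) (app J (a x) psi) = ip J (app J (a x) psi) (app J (b x) psi)"
      by (simp add: ab_psi)
    also have "\<dots> = ip J psi (app J (a x) (app J (b x) psi))" by (simp add: ip_app_herm[OF herm_a])
    also have "\<dots> = 1" using corr[of x x] Cdiag by simp
    finally show ?thesis .
  qed
  show "Re (ip J (app J (a x) (app J (a x) psi)) (app J (a x) (app J (a x) psi))) \<le> 1"
    using contr_a[of x "app J (a x) psi"] n1 by simp
  show "Re (ip J psi psi) \<le> 1" using psi_norm by simp
  have "ip J psi (app J (a x) (app J (a x) psi)) = 1" using n1 by (simp add: ip_app_herm[OF herm_a])
  then show "ip J (app J (a x) (app J (a x) psi)) psi = 1" using ip_cnj by (metis complex_cnj_one)
qed

definition K :: "'n \<Rightarrow> 'n \<Rightarrow> 'j \<Rightarrow> complex" where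
  "K x y = (\<lambda>j. app J (a x) (app J (a y) psi) j - complex_of_real (C$x$y) * psi j)"

lemma K_diag: "K x x = (\<lambda>j. 0)"
  by (simp add: K_def aa_psi Cdiag)

lemma K_sum_gen:
  "(\<Sum>y\<in>UNIV. complex_of_real (c$y) * K x y j) = app J (a x) (app J (lc a c) psi) j - complex_of_real (\<Sum>y\<in>UNIV. C$x$y * c$y) * psi j"
  "(\<Sum>y\<in>UNIV. complex_of_real (c$y) * K y x j) = app J (lc a c) (app J (a x) psi) j - complex_of_real (\<Sum>y\<in>UNIV. C$y$x * c$y) * psi j"
proof -
  have s1: "app J (a x) (app J (lc a c) psi) j = (\<Sum>y\<in>UNIV. complex_of_real (c$y) * app J (a x) (app J (a y) psi) j)"
  proof -
    have "app J (a x) (app J (lc a c) psi) = app J (a x) (\<lambda>j. \<Sum>y\<in>UNIV. complex_of_real (c$y) * app J (a y) psi j)"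
      by (simp only: app_lc)
    also have "\<dots> = (\<lambda>j. \<Sum>y\<in>UNIV. complex_of_real (c$y) * app J (a x) (app J (a y) psi) j)"
      by (simp only: app_sum app_scale)
    finally show ?thesis by simp
  qed
  have s2: "app J (lc a c) (app J (a x) psi) j = (\<Sum>y\<in>UNIV. complex_of_real (c$y) * app J (a y) (app J (a x) psi) j)"
    by (simp only: app_lc)
  have s3: "(\<Sum>y\<in>UNIV. complex_of_real (c$y) * (complex_of_real (C$x$y) * psi j)) = complex_of_real (\<Sum>y\<in>UNIV. C$x$y * c$y) * psi j"
    by (simp add: sum_distrib_left sum_distrib_right mult.commute mult.left_commute)
  have s4: "(\<Sum>y\<in>UNIV. complex_of_real (c$y) * (complex_of_real (C$y$x) * psi j)) = complex_of_real (\<Sum>y\<in>UNIV. C$y$x * c$y) * psi j"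
    by (simp add: sum_distrib_left sum_distrib_right mult.commute mult.left_commute)
  show "(\<Sum>y\<in>UNIV. complex_of_real (c$y) * K x y j) = app J (a x) (app J (lc a c) psi) j - complex_of_real (\<Sum>y\<in>UNIV. C$x$y * c$y) * psi j"
    unfolding K_def s1 s3[symmetric] by (simp add: right_diff_distrib sum_subtractf)
  show "(\<Sum>y\<in>UNIV. complex_of_real (c$y) * K y x j) = app J (lc a c) (app J (a x) psi) j - complex_of_real (\<Sum>y\<in>UNIV. C$y$x * c$y) * psi j"
    unfolding K_def s2 s4[symmetric] by (simp add: right_diff_distrib sum_subtractf)
qed

lemma K_sum1: assumes "C *v c = 0"
  shows "(\<Sum>y\<in>UNIV. complex_of_real (c$y) * K x y j) = 0"
proof -
  have "(\<Sum>y\<in>UNIV. C$x$y * c$y) = (C *v c)$x" by (simp add: matrix_vector_mult_def)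
  then show ?thesis using K_sum_gen(1)[of c x j] null_lc[OF assms] assms by simp
qed

lemma K_sum2: assumes "C *v c = 0"
  shows "(\<Sum>y\<in>UNIV. complex_of_real (c$y) * K y x j) = 0"
proof -
  have "(\<Sum>y\<in>UNIV. C$y$x * c$y) = (C *v c)$x" by (simp add: matrix_vector_mult_def Csym)
  moreover have "app J (lc a c) (app J (a x) psi) = app J (b x) (app J (lc a c) psi)"
    by (simp add: ab_psi comm_lc1)
  ultimately show ?thesis using K_sum_gen(2)[of c x j] null_lc[OF assms] assms by simp
qed

lemma K_anti: "K x y j + K y x j = 0"
proof -
  define Z where "Z x y = K x y j + K y x j" for x y
  have Zk: "(\<Sum>y\<in>UNIV. complex_of_real (c$y) * Z x y) = 0" if "C *v c = 0" for c x
  proof -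
    have "(\<Sum>y\<in>UNIV. complex_of_real (c$y) * Z x y) = (\<Sum>y\<in>UNIV. complex_of_real (c$y) * K x y j) + (\<Sum>y\<in>UNIV. complex_of_real (c$y) * K y x j)"
      unfolding Z_def by (simp only: distrib_left sum.distrib)
    then show ?thesis using K_sum1[OF that, of x j] K_sum2[OF that, of x j] by simp
  qed
  define R where "R = (\<chi> x y. Re (Z x y))"
  define I where "I = (\<chi> x y. Im (Z x y))"
  have Zs: "Z x y = Z y x" for x y by (simp add: Z_def add.commute)
  have Zd: "Z x x = 0" for x by (simp add: Z_def K_diag)
  have "R = 0"
  proof (rule ext_lemma[OF extC])
    show "transpose R = R" by (simp add: R_def transpose_def vec_eq_iff Zs)
    show "\<forall>i. R $ i $ i = 0" by (simp add: R_def Zd)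
    show "\<forall>c. C *v c = 0 \<longrightarrow> R *v c = 0"
    proof (intro allI impI)
      fix c :: "real^'n" assume c: "C *v c = 0"
      have "(R *v c)$x = Re (\<Sum>y\<in>UNIV. complex_of_real (c$y) * Z x y)" for x
        by (simp add: R_def matrix_vector_mult_def Re_sum mult.commute)
      then show "R *v c = 0" using Zk[OF c] by (simp add: vec_eq_iff)
    qed
  qed
  moreover have "I = 0"
  proof (rule ext_lemma[OF extC])
    show "transpose I = I" by (simp add: I_def transpose_def vec_eq_iff Zs)
    show "\<forall>i. I $ i $ i = 0" by (simp add: I_def Zd)
    show "\<forall>c. C *v c = 0 \<longrightarrow> I *v c = 0"
    proof (intro allI impI)
      fix c :: "real^'n" assume c: "C *v c = 0"
      have "(I *v c)$x = Im (\<Sum>y\<in>UNIV. complex_of_real (c$y) * Z x y)" for x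
        by (simp add: I_def matrix_vector_mult_def Im_sum mult.commute)
      then show "I *v c = 0" using Zk[OF c] by (simp add: vec_eq_iff)
    qed
  qed
  ultimately have "Re (Z x y) = 0" "Im (Z x y) = 0"
    by (metis R_def vec_lambda_beta zero_index, metis I_def vec_lambda_beta zero_index)
  then show ?thesis by (simp add: Z_def complex_eq_iff)
qed

lemma anti_lc:
  "(\<lambda>j. app J (lc a c) (app J (lc a e) psi) j + app J (lc a e) (app J (lc a c) psi) j)
   = (\<lambda>j. complex_of_real (2 * (c \<bullet> (C *v e))) * psi j)"
proof
  fix j
  have aa: "app J (a x) (app J (a y) psi) j = K x y j + complex_of_real (C$x$y) * psi j" for x y
    by (simp add: K_def)
  have "app J (lc a c) (app J (lc a e) psi) j + app J (lc a e) (app J (lc a c) psi) j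
     = (\<Sum>x\<in>UNIV. \<Sum>y\<in>UNIV. complex_of_real (c$x) * complex_of_real (e$y) *
          (app J (a x) (app J (a y) psi) j + app J (a y) (app J (a x) psi) j))"
  proof -
    have "app J (lc a e) (app J (lc a c) psi) j = (\<Sum>y\<in>UNIV. \<Sum>x\<in>UNIV. complex_of_real (e$y) * complex_of_real (c$x) * app J (a y) (app J (a x) psi) j)"
      by (simp only: app_lc_lc)
    also have "\<dots> = (\<Sum>x\<in>UNIV. \<Sum>y\<in>UNIV. complex_of_real (c$x) * complex_of_real (e$y) * app J (a y) (app J (a x) psi) j)"
      by (subst sum.swap) (simp add: mult.commute)
    finally show ?thesis by (simp add: app_lc_lc distrib_left sum.distrib)
  qed
  also have "\<dots> = (\<Sum>x\<in>UNIV. \<Sum>y\<in>UNIV. complex_of_real (c$x) * complex_of_real (e$y) *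
          (complex_of_real (2 * C$x$y) * psi j))"
  proof (intro sum.cong refl)
    fix x y
    have "app J (a x) (app J (a y) psi) j + app J (a y) (app J (a x) psi) j
        = (K x y j + K y x j) + complex_of_real (2 * C$x$y) * psi j"
      by (simp add: aa Csym[of x y] algebra_simps)
    then show "complex_of_real (c$x) * complex_of_real (e$y) *
          (app J (a x) (app J (a y) psi) j + app J (a y) (app J (a x) psi) j)
        = complex_of_real (c$x) * complex_of_real (e$y) * (complex_of_real (2 * C$x$y) * psi j)"
      by (simp add: K_anti)
  qed
  also have "\<dots> = complex_of_real (2 * (c \<bullet> (C *v e))) * psi j"
    by (simp add: inner_mv sum_distrib_left sum_distrib_right mult.commute mult.left_commute)
  finally show "app J (lc a c) (app J (lc a e) psi) j + app J (lc a e) (app J (lc a c) psi) j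
     = complex_of_real (2 * (c \<bullet> (C *v e))) * psi j" .
qed

theorem tsir_bound: "4 ^ (rank C div 2) \<le> card J"
proof -
  obtain cs where cs: "\<forall>i<rank C. \<forall>j<rank C. cs i \<bullet> (C *v cs j) = (if i = j then 1 else 0)"
    using gram_schmidt[OF Cpsd, of "rank C"] by auto
  interpret cl: cliff J psi "\<lambda>i. lc a (cs i)" "\<lambda>i. lc b (cs i)" "rank C"
  proof
    show "finite J" "psi \<in> Sp J" "ip J psi psi = 1" by (rule finJ, rule psi_Sp, rule psi_norm)
    show "herm J (lc a (cs i))" "herm J (lc b (cs i))" for i
      by (rule herm_lc, rule herm_a, rule herm_lc, rule herm_b)
    show "app J (lc a (cs i)) (app J (lc b (cs k)) v) = app J (lc b (cs k)) (app J (lc a (cs i)) v)" for i k v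
      by (rule comm_lc)
    show "app J (lc a (cs i)) psi = app J (lc b (cs i)) psi" for i by (rule ab_lc)
    show "(\<lambda>j. app J (lc a (cs i)) (app J (lc a (cs k)) psi) j + app J (lc a (cs k)) (app J (lc a (cs i)) psi) j)
       = (\<lambda>j. (if i = k then 2 else 0) * psi j)" if "i < rank C" "k < rank C" for i k
      using anti_lc[of "cs i" "cs k"] cs that by simp
  qed
  show ?thesis by (rule cl.cliff_bound) simp
qed

end

definition qf :: "'i set \<Rightarrow> 'i cmat \<Rightarrow> ('i \<Rightarrow> complex) \<Rightarrow> complex" where
  "qf I M v = (\<Sum>s\<in>I. \<Sum>t\<in>I. cnj (v s) * M s t * v t)"

lemma cpsd_on_qf: "cpsd_on I M \<longleftrightarrow> hermitian_on I M \<and> (\<forall>v. 0 \<le> Re (qf I M v))"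
  by (simp add: cpsd_on_def qf_def)

lemma mult_cnj_sq: "z * cnj z = (complex_of_real (cmod z))\<^sup>2"
  by (metis complex_norm_square of_real_power)

lemma sum_two:
  assumes "finite I" "a \<in> I" "t \<in> I" "a \<noteq> t" "\<forall>s\<in>I. s \<noteq> a \<and> s \<noteq> t \<longrightarrow> f s = 0"
  shows "sum f I = f a + f t"
proof -
  have "sum f I = sum f {a, t}"
    using assms by (intro sum.mono_neutral_cong_right) auto
  then show ?thesis using assms(4) by simp
qed

lemma qf_two:
  assumes "finite I" "a \<in> I" "t \<in> I" "a \<noteq> t"
  shows "qf I M (\<lambda>s. if s = a then x else if s = t then y else 0) =
    cnj x * M a a * x + cnj x * M a t * y + (cnj y * M t a * x + cnj y * M t t * y)"
proof -
  let ?v = "\<lambda>s. if s = a then x else if s = t then y else 0"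
  have inner: "(\<Sum>u\<in>I. cnj (?v s) * M s u * ?v u) = cnj (?v s) * M s a * x + cnj (?v s) * M s t * y" for s
    using assms by (subst sum_two[of I a t]) auto
  show ?thesis unfolding qf_def inner
    using assms by (subst sum_two[of I a t]) auto
qed

lemma psd_row_zero:
  assumes psd: "cpsd_on I M" and fin: "finite I" and a: "a \<in> I" and t: "t \<in> I" and z: "M a a = 0"
  shows "M a t = 0"
proof (rule ccontr)
  assume nz: "M a t \<noteq> 0"
  then have ta: "t \<noteq> a" using z by auto
  have herm: "M t a = cnj (M a t)" using psd a t unfolding cpsd_on_def hermitian_on_def by blast
  define q where "q = (cmod (M a t))\<^sup>2"
  have q0: "0 < q" using nz by (simp add: q_def)
  define r where "r = (\<bar>Re (M t t)\<bar> + 1) / (2 * q)"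
  define x where "x = - complex_of_real r * M a t"
  have "0 \<le> Re (qf I M (\<lambda>s. if s = a then x else if s = t then 1 else 0))"
    using psd by (simp add: cpsd_on_qf)
  also have "qf I M (\<lambda>s. if s = a then x else if s = t then 1 else 0) =
      cnj x * M a t + M t a * x + M t t"
    using qf_two[OF fin a t ta[symmetric], of M x 1] z by simp
  also have "cnj x * M a t + M t a * x = - complex_of_real (2 * r * q)"
    unfolding x_def herm q_def
    by (simp add: mult_cnj_sq mult.commute mult.left_commute)
  finally have "0 \<le> - 2 * r * q + Re (M t t)" by simp
  moreover have "2 * r * q = \<bar>Re (M t t)\<bar> + 1" using q0 by (simp add: r_def)
  ultimately show False by linarith
qed

lemma herm_diag_real: "hermitian_on I M \<Longrightarrow> a \<in> I \<Longrightarrow> M a a = complex_of_real (Re (M a a))"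
proof -
  assume h: "hermitian_on I M" and a: "a \<in> I"
  then have "M a a = cnj (M a a)" unfolding hermitian_on_def by blast
  then have "Im (M a a) = 0" by (metis complex_cnj_cancel_iff complex_cnj_zero_iff Im_complex_div_eq_0 complex_eq_iff complex_cnj_complex_of_real cnj.simps(2) neg_equal_zero)
  then show ?thesis by (simp add: complex_eq_iff)
qed

lemma qf_restrict:
  assumes "finite I" "F \<subseteq> I"
  shows "qf I M (\<lambda>s. if s \<in> F then v s else 0) = qf F M v"
proof -
  have "qf I M (\<lambda>s. if s \<in> F then v s else 0) = (\<Sum>s\<in>I. if s \<in> F then (\<Sum>t\<in>I. if t \<in> F then cnj (v s) * M s t * v t else 0) else 0)"
    unfolding qf_def by (auto intro!: sum.cong)
  also have "\<dots> = (\<Sum>s\<in>F. (\<Sum>t\<in>I. if t \<in> F then cnj (v s) * M s t * v t else 0))"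
    using assms by (simp add: sum.If_cases Int_absorb1)
  also have "\<dots> = qf F M v"
    unfolding qf_def using assms by (simp add: sum.If_cases Int_absorb1)
  finally show ?thesis .
qed

lemma cpsd_restrict:
  assumes "cpsd_on I M" "finite I" "F \<subseteq> I" shows "cpsd_on F M"
  unfolding cpsd_on_qf
proof
  show "hermitian_on F M" using assms unfolding cpsd_on_def hermitian_on_def by blast
  show "\<forall>v. 0 \<le> Re (qf F M v)"
    using assms qf_restrict[OF assms(2,3)] unfolding cpsd_on_qf by metis
qed

lemma qf_insert:
  assumes "finite F" "a \<notin> F"
  shows "qf (insert a F) M v = cnj (v a) * M a a * v a + (\<Sum>t\<in>F. cnj (v a) * M a t * v t)
      + (\<Sum>s\<in>F. cnj (v s) * M s a * v a) + qf F M v"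
  using assms by (simp add: qf_def sum.distrib algebra_simps)

lemma cholesky:
  assumes "finite I"
  shows "cpsd_on I M \<Longrightarrow> \<exists>W. \<forall>s\<in>I. \<forall>t\<in>I. M s t = (\<Sum>k\<in>I. W s k * cnj (W t k))"
  using assms
proof (induction I arbitrary: M rule: finite_induct)
  case empty then show ?case by simp
next
  case (insert a F)
  let ?I = "insert a F"
  have psd: "cpsd_on ?I M" by fact
  have herm: "M t s = cnj (M s t)" if "s \<in> ?I" "t \<in> ?I" for s t
    using psd that unfolding cpsd_on_def hermitian_on_def by blast
  have finI: "finite ?I" using insert by simp
  show ?case
  proof (cases "M a a = 0")
    case True
    have row: "M a t = 0" if "t \<in> ?I" for t using psd_row_zero[OF psd finI _ that True] by simp
    have "cpsd_on F M" using cpsd_restrict[OF psd finI] by blast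
    then obtain W' where W': "\<forall>s\<in>F. \<forall>t\<in>F. M s t = (\<Sum>k\<in>F. W' s k * cnj (W' t k))"
      using insert.IH by blast
    define W where "W s k = (if s = a \<or> k = a then 0 else W' s k)" for s k
    have "M s t = (\<Sum>k\<in>?I. W s k * cnj (W t k))" if "s \<in> ?I" "t \<in> ?I" for s t
    proof -
      have "(\<Sum>k\<in>?I. W s k * cnj (W t k)) = (\<Sum>k\<in>F. W s k * cnj (W t k))"
        using insert by (simp add: W_def)
      show ?thesis
      proof (cases "s = a \<or> t = a")
        case True
        have "M s t = 0"
        proof (cases "s = a")
          case True then show ?thesis using row that by simp
        next
          case False
          then have "t = a" using True by simp
          then show ?thesis using herm[of a s] row[of s] that by simp
        qed
        moreover have "(\<Sum>k\<in>F. W s k * cnj (W t k)) = 0" using True by (intro sum.neutral) (auto simp: W_def)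
        ultimately show ?thesis using \<open>(\<Sum>k\<in>?I. W s k * cnj (W t k)) = _\<close> by simp
      next
        case False
        then have "s \<in> F" "t \<in> F" using that by auto
        moreover have "(\<Sum>k\<in>F. W s k * cnj (W t k)) = (\<Sum>k\<in>F. W' s k * cnj (W' t k))"
          using False insert.hyps(2) by (intro sum.cong) (auto simp: W_def)
        ultimately show ?thesis using W' \<open>(\<Sum>k\<in>?I. W s k * cnj (W t k)) = _\<close> by simp
      qed
    qed
    then show ?thesis by blast
  next
    case False
    define p where "p = M a a"
    define pr where "pr = Re p"
    have preal: "p = complex_of_real pr"
      using herm[of a a] unfolding p_def pr_def by (simp add: complex_eq_iff)
    have "0 \<le> Re (qf ?I M (\<lambda>s. if s \<in> {a} then 1 else 0))" using psd by (simp add: cpsd_on_qf)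
    then have "0 \<le> Re (qf {a} M (\<lambda>s. 1))" using qf_restrict[OF finI, of "{a}" M "\<lambda>s. 1"] by simp
    then have "0 \<le> pr" by (simp add: qf_def pr_def p_def)
    moreover have "pr \<noteq> 0" using False preal p_def by auto
    ultimately have pr0: "0 < pr" by simp
    define sg where "sg s t = M s t - M s a * M a t / p" for s t
    have "cpsd_on F sg"
      unfolding cpsd_on_qf
    proof
      show "hermitian_on F sg"
        unfolding hermitian_on_def sg_def
      proof (intro ballI)
        fix s t assume "s \<in> F" "t \<in> F"
        show "M t s - M t a * M a s / p = cnj (M s t - M s a * M a t / p)"
        proof -
          have "M t s = cnj (M s t)" "M t a = cnj (M a t)" "M a s = cnj (M s a)"
            using herm[of s t] herm[of a t] herm[of s a] \<open>s \<in> F\<close> \<open>t \<in> F\<close> by auto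
          then show ?thesis using preal by (simp add: mult.commute)
        qed
      qed
      show "\<forall>v. 0 \<le> Re (qf F sg v)"
      proof
        fix v
        define beta where "beta = (\<Sum>t\<in>F. M a t * v t)"
        define v' where "v' = v(a := - beta / p)"
        have cb: "(\<Sum>s\<in>F. cnj (v s) * M s a) = cnj beta"
          unfolding beta_def cnj_sum
        proof (rule sum.cong[OF refl])
          fix s assume "s \<in> F"
          then have "M s a = cnj (M a s)" using herm[of a s] by simp
          then show "cnj (v s) * M s a = cnj (M a s * v s)" by (simp add: mult.commute)
        qed
        have v'F: "\<And>s. s \<in> F \<Longrightarrow> v' s = v s" using insert.hyps(2) by (auto simp: v'_def)
        have "qf ?I M v' = cnj (v' a) * p * v' a + (\<Sum>t\<in>F. cnj (v' a) * M a t * v' t)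
            + (\<Sum>s\<in>F. cnj (v' s) * M s a * v' a) + qf F M v'"
          using qf_insert[OF insert.hyps] p_def by simp
        also have "qf F M v' = qf F M v" unfolding qf_def using v'F by (intro sum.cong) auto
        also have "(\<Sum>t\<in>F. cnj (v' a) * M a t * v' t) = cnj (v' a) * beta"
          unfolding beta_def sum_distrib_left using v'F by (intro sum.cong) (auto simp: mult.assoc)
        also have "(\<Sum>s\<in>F. cnj (v' s) * M s a * v' a) = cnj beta * v' a"
          unfolding cb[symmetric] sum_distrib_right using v'F by (intro sum.cong) auto
        also have "v' a = - beta / p" by (simp add: v'_def)
        finally have e1: "qf ?I M v' = qf F M v - cnj beta * beta / p"
          using pr0 preal by (simp add: field_simps)
        have "qf F sg v = qf F M v - (\<Sum>s\<in>F. \<Sum>t\<in>F. cnj (v s) * M s a * (M a t * v t)) / p"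
          unfolding qf_def sg_def
          by (simp add: sum_subtractf sum_divide_distrib algebra_simps)
        also have "(\<Sum>s\<in>F. \<Sum>t\<in>F. cnj (v s) * M s a * (M a t * v t)) = cnj beta * beta"
        proof -
          have "(\<Sum>s\<in>F. \<Sum>t\<in>F. cnj (v s) * M s a * (M a t * v t)) = (\<Sum>s\<in>F. cnj (v s) * M s a) * (\<Sum>t\<in>F. M a t * v t)"
            by (simp add: sum_product)
          then show ?thesis using cb by (simp add: beta_def)
        qed
        finally have "qf F sg v = qf ?I M v'" using e1 by simp
        then show "0 \<le> Re (qf F sg v)" using psd by (simp add: cpsd_on_qf)
      qed
    qed
    then obtain W' where W': "\<forall>s\<in>F. \<forall>t\<in>F. sg s t = (\<Sum>k\<in>F. W' s k * cnj (W' t k))"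
      using insert.IH by blast
    define c where "c s = M s a / complex_of_real (sqrt pr)" for s
    define W where "W s k = (if k = a then c s else if s = a then 0 else W' s k)" for s k
    have cc: "c s * cnj (c t) = M s a * M a t / p" if "t \<in> ?I" for s t
    proof -
      have "M t a = cnj (M a t)" using herm[of a t] that by simp
      moreover have "complex_of_real (sqrt pr) * complex_of_real (sqrt pr) = complex_of_real pr"
        using pr0 by (simp flip: of_real_mult)
      ultimately show ?thesis using pr0 preal by (simp add: c_def field_simps)
    qed
    have "M s t = (\<Sum>k\<in>?I. W s k * cnj (W t k))" if st: "s \<in> ?I" "t \<in> ?I" for s t
    proof -
      have sumI: "(\<Sum>k\<in>?I. W s k * cnj (W t k)) = c s * cnj (c t) + (\<Sum>k\<in>F. W s k * cnj (W t k))"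
        using insert.hyps by (simp add: W_def)
      show ?thesis
      proof (cases "s = a \<or> t = a")
        case True
        have z: "(\<Sum>k\<in>F. W s k * cnj (W t k)) = 0"
          using True insert.hyps(2) by (intro sum.neutral) (auto simp: W_def)
        show ?thesis
        proof (cases "s = a")
          case True
          then show ?thesis using sumI z cc[OF st(2)] preal pr0 p_def by (simp add: field_simps)
        next
          case False
          then have "t = a" using \<open>s = a \<or> t = a\<close> by simp
          then show ?thesis using sumI z cc[OF st(2)] preal pr0 p_def by (simp add: field_simps)
        qed
      next
        case False
        then have "s \<in> F" "t \<in> F" using st by auto
        have "(\<Sum>k\<in>F. W s k * cnj (W t k)) = (\<Sum>k\<in>F. W' s k * cnj (W' t k))"
          using False insert.hyps(2) by (intro sum.cong) (auto simp: W_def)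
        also have "\<dots> = sg s t" using W' \<open>s \<in> F\<close> \<open>t \<in> F\<close> by simp
        finally show ?thesis using sumI cc[OF st(2)] by (simp add: sg_def)
      qed
    qed
    then show ?thesis by blast
  qed
qed

lemma ip_app_expand: "ip I u (app I M w) = (\<Sum>s\<in>I. \<Sum>t\<in>I. cnj (u s) * M s t * w t)"
  by (simp add: ip_def app_def sum_distrib_left mult.assoc)

lemma ip_app_qf: "ip I v (app I M v) = qf I M v"
  by (simp add: ip_app_expand qf_def)

lemma ip_cong: "(\<And>j. j \<in> I \<Longrightarrow> v j = v' j) \<Longrightarrow> (\<And>j. j \<in> I \<Longrightarrow> w j = w' j) \<Longrightarrow> ip I v w = ip I v' w'"
  by (simp add: ip_def)

lemma psd_CS:
  assumes psd: "cpsd_on I M" and fin: "finite I"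
  shows "(cmod (ip I u (app I M w)))\<^sup>2 \<le> Re (ip I u (app I M u)) * Re (ip I w (app I M w))"
proof -
  obtain W where W: "\<forall>s\<in>I. \<forall>t\<in>I. M s t = (\<Sum>k\<in>I. W s k * cnj (W t k))"
    using cholesky[OF fin psd] by blast
  define y where "y u = (\<lambda>k. \<Sum>s\<in>I. cnj (W s k) * u s)" for u :: "_ \<Rightarrow> complex"
  have key: "ip I u (app I M w) = ip I (y u) (y w)" for u w
  proof -
    have "ip I u (app I M w) = (\<Sum>s\<in>I. \<Sum>t\<in>I. cnj (u s) * (\<Sum>k\<in>I. W s k * cnj (W t k)) * w t)"
      unfolding ip_app_expand using W by (intro sum.cong refl) auto
    also have "\<dots> = (\<Sum>s\<in>I. \<Sum>t\<in>I. \<Sum>k\<in>I. cnj (u s) * W s k * (cnj (W t k) * w t))"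
      by (simp add: sum_distrib_left sum_distrib_right mult.assoc)
    also have "\<dots> = (\<Sum>s\<in>I. \<Sum>k\<in>I. \<Sum>t\<in>I. cnj (u s) * W s k * (cnj (W t k) * w t))"
      by (rule sum.cong[OF refl]) (rule sum.swap)
    also have "\<dots> = (\<Sum>k\<in>I. \<Sum>s\<in>I. \<Sum>t\<in>I. cnj (u s) * W s k * (cnj (W t k) * w t))"
      by (rule sum.swap)
    also have "\<dots> = (\<Sum>k\<in>I. (\<Sum>s\<in>I. cnj (u s) * W s k) * (\<Sum>t\<in>I. cnj (W t k) * w t))"
      by (simp add: sum_product)
    also have "\<dots> = ip I (y u) (y w)"
      by (simp add: ip_def y_def cnj_sum mult.commute)
    finally show ?thesis .
  qed
  show ?thesis unfolding key by (rule CS)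
qed

lemma povm_contr:
  assumes fin: "finite D" and p1: "cpsd_on D M1" and p2: "cpsd_on D M2"
    and sumI: "\<forall>s\<in>D. \<forall>t\<in>D. M1 s t + M2 s t = (if s = t then 1 else 0)"
  shows "Re (ip D (app D (\<lambda>s t. M1 s t - M2 s t) w) (app D (\<lambda>s t. M1 s t - M2 s t) w)) \<le> Re (ip D w w)"
proof -
  define m where "m = app D M1 w"
  have m2: "app D M2 v j = v j - app D M1 v j" if "j \<in> D" for v j
  proof -
    have "app D M2 v j = (\<Sum>t\<in>D. ((if j = t then 1 else 0) - M1 j t) * v t)"
    proof -
      have "M2 j t = (if j = t then 1 else 0) - M1 j t" if "t \<in> D" for t
      proof -
        have "M1 j t + M2 j t = (if j = t then 1 else 0)" using sumI \<open>j \<in> D\<close> that by blast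
        then show ?thesis by (metis add_diff_cancel_left')
      qed
      then show ?thesis using \<open>j \<in> D\<close> by (simp add: app_def)
    qed
    also have "\<dots> = (\<Sum>t\<in>D. (if j = t then v t else 0) - M1 j t * v t)"
      by (intro sum.cong refl) (simp add: left_diff_distrib)
    also have "\<dots> = v j - app D M1 v j"
      using that fin by (simp add: app_def sum_subtractf)
    finally show ?thesis .
  qed
  have Aw: "app D (\<lambda>s t. M1 s t - M2 s t) w j = 2 * m j - w j" if "j \<in> D" for j
  proof -
    have "app D (\<lambda>s t. M1 s t - M2 s t) w j = app D M1 w j - app D M2 w j"
      using that by (simp add: app_def left_diff_distrib sum_subtractf)
    then show ?thesis using m2[OF that, of w] by (simp add: m_def)
  qed
  have "ip D (app D (\<lambda>s t. M1 s t - M2 s t) w) (app D (\<lambda>s t. M1 s t - M2 s t) w)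
      = ip D (\<lambda>j. 2 * m j - w j) (\<lambda>j. 2 * m j - w j)"
    by (rule ip_cong) (simp_all add: Aw)
  also have "\<dots> = 4 * ip D m m - 2 * ip D m w - 2 * ip D w m + ip D w w"
    by (simp only: ip_diff_left ip_diff_right ip_scale_left ip_scale_right) (simp add: algebra_simps)
  finally have e0: "ip D (app D (\<lambda>s t. M1 s t - M2 s t) w) (app D (\<lambda>s t. M1 s t - M2 s t) w)
      = 4 * ip D m m - 2 * ip D m w - 2 * ip D w m + ip D w w" .
  have e: "Re (ip D (app D (\<lambda>s t. M1 s t - M2 s t) w) (app D (\<lambda>s t. M1 s t - M2 s t) w))
      = 4 * Re (ip D m m) - 4 * Re (ip D w m) + Re (ip D w w)"
  proof -
    have "Re (cnj (ip D m w)) = Re (ip D m w)" by simp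
    then have "Re (ip D w m) = Re (ip D m w)" using ip_cnj[of D m w] by simp
    then show ?thesis using e0 by simp
  qed
  define q where "q = Re (ip D m m)"
  define R where "R = Re (ip D w m)"
  have q0: "0 \<le> q" by (simp add: q_def ip_self_ge0)
  have R0: "0 \<le> R" using p1 unfolding R_def m_def ip_app_qf cpsd_on_qf by blast
  have mm: "ip D m m = complex_of_real q" using ip_self_of_Re unfolding q_def by blast
  have eqs: "ip D m (app D M1 m) + ip D m (app D M2 m) = ip D m m"
  proof -
    have "ip D m (app D M1 m) + ip D m (app D M2 m) = ip D m (\<lambda>j. app D M1 m j + app D M2 m j)"
      by (simp add: ip_add_right)
    also have "\<dots> = ip D m m" by (rule ip_cong) (simp_all add: m2)
    finally show ?thesis .
  qed
  have p2m: "0 \<le> Re (ip D m (app D M2 m))" using p2 unfolding ip_app_qf cpsd_on_qf by blast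
  have "Re (ip D m (app D M1 m)) + Re (ip D m (app D M2 m)) = q"
    using arg_cong[OF eqs, of Re] unfolding q_def by simp
  then have mM: "Re (ip D m (app D M1 m)) \<le> q" using p2m by linarith
  have cs: "(cmod (ip D m (app D M1 w)))\<^sup>2 \<le> Re (ip D m (app D M1 m)) * Re (ip D w (app D M1 w))"
    by (rule psd_CS[OF p1 fin])
  have "(cmod (ip D m (app D M1 w)))\<^sup>2 = q\<^sup>2" unfolding m_def[symmetric] mm by simp
  moreover have "Re (ip D m (app D M1 m)) * Re (ip D w (app D M1 w)) \<le> q * R"
    unfolding m_def[symmetric] R_def[symmetric] using mM R0 by (rule mult_right_mono)
  ultimately have qq: "q * q \<le> q * R" using cs by (simp add: power2_eq_square)
  have "q \<le> R"
  proof (cases "q = 0")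
    case True then show ?thesis using R0 by simp
  next
    case False then have "0 < q" using q0 by simp
    then show ?thesis using qq by simp
  qed
  then show ?thesis using e q_def R_def by simp
qed

lemma sumJ:
  assumes "finite D" "finite K"
  shows "(\<Sum>p\<in>(D\<times>D)\<times>K. f p) = (\<Sum>i1\<in>D. \<Sum>i2\<in>D. \<Sum>k\<in>K. f ((i1,i2),k))"
  by (simp add: sum.cartesian_product')

definition opA :: "(nat \<Rightarrow> nat \<Rightarrow> complex) \<Rightarrow> ((nat\<times>nat)\<times>'k) \<Rightarrow> ((nat\<times>nat)\<times>'k) \<Rightarrow> complex" where
  "opA A p q = (if snd (fst p) = snd (fst q) \<and> snd p = snd q then A (fst (fst p)) (fst (fst q)) else 0)"

definition opB :: "(nat \<Rightarrow> nat \<Rightarrow> complex) \<Rightarrow> ((nat\<times>nat)\<times>'k) \<Rightarrow> ((nat\<times>nat)\<times>'k) \<Rightarrow> complex" where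
  "opB B p q = (if fst (fst p) = fst (fst q) \<and> snd p = snd q then B (snd (fst p)) (snd (fst q)) else 0)"

lemma app_opA:
  assumes "finite D" "finite K" "i1 \<in> D" "i2 \<in> D" "k \<in> K"
  shows "app ((D\<times>D)\<times>K) (opA A) v ((i1,i2),k) = (\<Sum>j1\<in>D. A i1 j1 * v ((j1,i2),k))"
proof -
  have "app ((D\<times>D)\<times>K) (opA A) v ((i1,i2),k) = (\<Sum>j1\<in>D. \<Sum>j2\<in>D. \<Sum>l\<in>K. opA A ((i1,i2),k) ((j1,j2),l) * v ((j1,j2),l))"
    using assms by (simp add: app_def sumJ)
  also have "\<dots> = (\<Sum>j1\<in>D. \<Sum>j2\<in>D. if j2 = i2 then (\<Sum>l\<in>K. if l = k then A i1 j1 * v ((j1,j2),l) else 0) else 0)"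
  proof (intro sum.cong refl)
    fix j1 j2 show "(\<Sum>l\<in>K. opA A ((i1,i2),k) ((j1,j2),l) * v ((j1,j2),l)) =
      (if j2 = i2 then (\<Sum>l\<in>K. if l = k then A i1 j1 * v ((j1,j2),l) else 0) else 0)"
      by (cases "j2 = i2") (auto simp: opA_def intro: sum.cong)
  qed
  also have "\<dots> = (\<Sum>j1\<in>D. A i1 j1 * v ((j1,i2),k))"
    using assms by (simp add: sum.delta')
  finally show ?thesis .
qed

lemma app_opB:
  assumes "finite D" "finite K" "i1 \<in> D" "i2 \<in> D" "k \<in> K"
  shows "app ((D\<times>D)\<times>K) (opB B) v ((i1,i2),k) = (\<Sum>j2\<in>D. B i2 j2 * v ((i1,j2),k))"
proof -
  have "app ((D\<times>D)\<times>K) (opB B) v ((i1,i2),k) = (\<Sum>j1\<in>D. \<Sum>j2\<in>D. \<Sum>l\<in>K. opB B ((i1,i2),k) ((j1,j2),l) * v ((j1,j2),l))"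
    using assms by (simp add: app_def sumJ)
  also have "\<dots> = (\<Sum>j1\<in>D. if j1 = i1 then (\<Sum>j2\<in>D. (\<Sum>l\<in>K. if l = k then B i2 j2 * v ((j1,j2),l) else 0)) else 0)"
  proof (intro sum.cong refl)
    fix j1 show "(\<Sum>j2\<in>D. \<Sum>l\<in>K. opB B ((i1,i2),k) ((j1,j2),l) * v ((j1,j2),l)) =
      (if j1 = i1 then (\<Sum>j2\<in>D. (\<Sum>l\<in>K. if l = k then B i2 j2 * v ((j1,j2),l) else 0)) else 0)"
      by (cases "j1 = i1") (auto simp: opB_def intro!: sum.cong)
  qed
  also have "\<dots> = (\<Sum>j2\<in>D. B i2 j2 * v ((i1,j2),k))"
    using assms by (simp add: sum.delta')
  finally show ?thesis .
qed

lemma app_out: "p \<notin> J \<Longrightarrow> app J T v p = 0" by (simp add: app_def)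

lemma comm_opAB:
  assumes "finite D" "finite K"
  shows "app ((D\<times>D)\<times>K) (opA A) (app ((D\<times>D)\<times>K) (opB B) v) = app ((D\<times>D)\<times>K) (opB B) (app ((D\<times>D)\<times>K) (opA A) v)"
proof
  fix p
  show "app ((D\<times>D)\<times>K) (opA A) (app ((D\<times>D)\<times>K) (opB B) v) p = app ((D\<times>D)\<times>K) (opB B) (app ((D\<times>D)\<times>K) (opA A) v) p"
  proof (cases "p \<in> (D\<times>D)\<times>K")
    case False then show ?thesis by (simp add: app_out)
  next
    case True
    then obtain i1 i2 k where p: "p = ((i1,i2),k)" "i1 \<in> D" "i2 \<in> D" "k \<in> K" by auto
    have "app ((D\<times>D)\<times>K) (opA A) (app ((D\<times>D)\<times>K) (opB B) v) p = (\<Sum>j1\<in>D. A i1 j1 * (\<Sum>j2\<in>D. B i2 j2 * v ((j1,j2),k)))"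
      using p assms by (simp add: app_opA app_opB)
    also have "\<dots> = (\<Sum>j2\<in>D. B i2 j2 * (\<Sum>j1\<in>D. A i1 j1 * v ((j1,j2),k)))"
      by (simp add: sum_distrib_left mult.left_commute) (rule sum.swap)
    also have "\<dots> = app ((D\<times>D)\<times>K) (opB B) (app ((D\<times>D)\<times>K) (opA A) v) p"
      using p assms by (simp add: app_opA app_opB)
    finally show ?thesis .
  qed
qed

lemma herm_opA:
  assumes "\<forall>i\<in>D. \<forall>j\<in>D. A j i = cnj (A i j)"
  shows "herm ((D\<times>D)\<times>K) (opA A)"
  unfolding herm_def
proof (intro ballI)
  fix p q assume p: "p \<in> (D\<times>D)\<times>K" and q: "q \<in> (D\<times>D)\<times>K"
  have "A (fst (fst q)) (fst (fst p)) = cnj (A (fst (fst p)) (fst (fst q)))"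
    using assms p q by auto
  then show "opA A q p = cnj (opA A p q)" by (auto simp: opA_def)
qed

lemma herm_opB:
  assumes "\<forall>i\<in>D. \<forall>j\<in>D. B j i = cnj (B i j)"
  shows "herm ((D\<times>D)\<times>K) (opB B)"
  unfolding herm_def
proof (intro ballI)
  fix p q assume p: "p \<in> (D\<times>D)\<times>K" and q: "q \<in> (D\<times>D)\<times>K"
  have "B (snd (fst q)) (snd (fst p)) = cnj (B (snd (fst p)) (snd (fst q)))"
    using assms p q by auto
  then show "opB B q p = cnj (opB B p q)" by (auto simp: opB_def)
qed

lemma ipJ: "finite D \<Longrightarrow> finite K \<Longrightarrow>
  ip ((D\<times>D)\<times>K) u w = (\<Sum>i1\<in>D. \<Sum>i2\<in>D. \<Sum>k\<in>K. cnj (u ((i1,i2),k)) * w ((i1,i2),k))"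
  by (simp add: ip_def sumJ)

lemma contr_opA:
  assumes fD: "finite D" and fK: "finite K"
    and contr: "\<And>w. Re (ip D (app D A w) (app D A w)) \<le> Re (ip D w w)"
  shows "Re (ip ((D\<times>D)\<times>K) (app ((D\<times>D)\<times>K) (opA A) v) (app ((D\<times>D)\<times>K) (opA A) v)) \<le> Re (ip ((D\<times>D)\<times>K) v v)"
proof -
  let ?J = "(D\<times>D)\<times>K"
  let ?u = "app ?J (opA A) v"
  define w where "w i2 k = (\<lambda>j1. v ((j1,i2),k))" for i2 k
  have uw: "?u ((i1,i2),k) = app D A (w i2 k) i1" if "i1 \<in> D" "i2 \<in> D" "k \<in> K" for i1 i2 k
    using app_opA[OF fD fK that, of A v] that by (simp add: app_def w_def)
  have "ip ?J ?u ?u = (\<Sum>i1\<in>D. \<Sum>i2\<in>D. \<Sum>k\<in>K. cnj (?u ((i1,i2),k)) * ?u ((i1,i2),k))"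
    by (rule ipJ[OF fD fK])
  also have "\<dots> = (\<Sum>i2\<in>D. \<Sum>k\<in>K. \<Sum>i1\<in>D. cnj (?u ((i1,i2),k)) * ?u ((i1,i2),k))"
    by (subst sum.swap) (intro sum.cong refl, rule sum.swap)
  also have "\<dots> = (\<Sum>i2\<in>D. \<Sum>k\<in>K. ip D (app D A (w i2 k)) (app D A (w i2 k)))"
    unfolding ip_def by (intro sum.cong refl) (simp add: uw)
  finally have e1: "ip ?J ?u ?u = (\<Sum>i2\<in>D. \<Sum>k\<in>K. ip D (app D A (w i2 k)) (app D A (w i2 k)))" .
  have "ip ?J v v = (\<Sum>i1\<in>D. \<Sum>i2\<in>D. \<Sum>k\<in>K. cnj (v ((i1,i2),k)) * v ((i1,i2),k))"
    by (rule ipJ[OF fD fK])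
  also have "\<dots> = (\<Sum>i2\<in>D. \<Sum>k\<in>K. \<Sum>i1\<in>D. cnj (v ((i1,i2),k)) * v ((i1,i2),k))"
    by (subst sum.swap) (intro sum.cong refl, rule sum.swap)
  also have "\<dots> = (\<Sum>i2\<in>D. \<Sum>k\<in>K. ip D (w i2 k) (w i2 k))"
    unfolding ip_def w_def by simp
  finally have e2: "ip ?J v v = (\<Sum>i2\<in>D. \<Sum>k\<in>K. ip D (w i2 k) (w i2 k))" .
  show ?thesis unfolding e1 e2 Re_sum by (intro sum_mono contr)
qed

lemma contr_opB:
  assumes fD: "finite D" and fK: "finite K"
    and contr: "\<And>w. Re (ip D (app D B w) (app D B w)) \<le> Re (ip D w w)"
  shows "Re (ip ((D\<times>D)\<times>K) (app ((D\<times>D)\<times>K) (opB B) v) (app ((D\<times>D)\<times>K) (opB B) v)) \<le> Re (ip ((D\<times>D)\<times>K) v v)"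
proof -
  let ?J = "(D\<times>D)\<times>K"
  let ?u = "app ?J (opB B) v"
  define w where "w i1 k = (\<lambda>j2. v ((i1,j2),k))" for i1 k
  have uw: "?u ((i1,i2),k) = app D B (w i1 k) i2" if "i1 \<in> D" "i2 \<in> D" "k \<in> K" for i1 i2 k
    using app_opB[OF fD fK that, of B v] that by (simp add: app_def w_def)
  have "ip ?J ?u ?u = (\<Sum>i1\<in>D. \<Sum>i2\<in>D. \<Sum>k\<in>K. cnj (?u ((i1,i2),k)) * ?u ((i1,i2),k))"
    by (rule ipJ[OF fD fK])
  also have "\<dots> = (\<Sum>i1\<in>D. \<Sum>k\<in>K. \<Sum>i2\<in>D. cnj (?u ((i1,i2),k)) * ?u ((i1,i2),k))"
    by (intro sum.cong refl, rule sum.swap)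
  also have "\<dots> = (\<Sum>i1\<in>D. \<Sum>k\<in>K. ip D (app D B (w i1 k)) (app D B (w i1 k)))"
    unfolding ip_def by (intro sum.cong refl) (simp add: uw)
  finally have e1: "ip ?J ?u ?u = (\<Sum>i1\<in>D. \<Sum>k\<in>K. ip D (app D B (w i1 k)) (app D B (w i1 k)))" .
  have "ip ?J v v = (\<Sum>i1\<in>D. \<Sum>i2\<in>D. \<Sum>k\<in>K. cnj (v ((i1,i2),k)) * v ((i1,i2),k))"
    by (rule ipJ[OF fD fK])
  also have "\<dots> = (\<Sum>i1\<in>D. \<Sum>k\<in>K. \<Sum>i2\<in>D. cnj (v ((i1,i2),k)) * v ((i1,i2),k))"
    by (intro sum.cong refl, rule sum.swap)
  also have "\<dots> = (\<Sum>i1\<in>D. \<Sum>k\<in>K. ip D (w i1 k) (w i1 k))"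
    unfolding ip_def w_def by simp
  finally have e2: "ip ?J v v = (\<Sum>i1\<in>D. \<Sum>k\<in>K. ip D (w i1 k) (w i1 k))" .
  show ?thesis unfolding e1 e2 Re_sum by (intro sum_mono contr)
qed

lemma corr_opAB:
  assumes fD: "finite D"
    and W: "\<forall>s\<in>D\<times>D. \<forall>t\<in>D\<times>D. rho s t = (\<Sum>k\<in>D\<times>D. W s k * cnj (W t k))"
  shows "ip ((D\<times>D)\<times>(D\<times>D)) (\<lambda>p. if p \<in> (D\<times>D)\<times>(D\<times>D) then W (fst p) (snd p) else 0)
      (app ((D\<times>D)\<times>(D\<times>D)) (opA A) (app ((D\<times>D)\<times>(D\<times>D)) (opB B) (\<lambda>p. if p \<in> (D\<times>D)\<times>(D\<times>D) then W (fst p) (snd p) else 0)))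
    = (\<Sum>s\<in>D\<times>D. \<Sum>t\<in>D\<times>D. A (fst s) (fst t) * B (snd s) (snd t) * rho t s)"
proof -
  let ?I = "D\<times>D"
  let ?J = "?I \<times> ?I"
  let ?psi = "\<lambda>p. if p \<in> ?J then W (fst p) (snd p) else 0"
  have fI: "finite ?I" using fD by simp
  have X: "app ?J (opA A) (app ?J (opB B) ?psi) (s,k) = (\<Sum>t\<in>?I. A (fst s) (fst t) * B (snd s) (snd t) * W t k)"
    if sk: "s \<in> ?I" "k \<in> ?I" for s k
  proof -
    obtain i1 i2 where s: "s = (i1,i2)" "i1 \<in> D" "i2 \<in> D" using sk by (cases s) auto
    have "app ?J (opA A) (app ?J (opB B) ?psi) ((i1,i2),k) = (\<Sum>j1\<in>D. A i1 j1 * (\<Sum>j2\<in>D. B i2 j2 * W (j1,j2) k))"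
      using s sk fD fI by (simp add: app_opA app_opB)
    also have "\<dots> = (\<Sum>j1\<in>D. \<Sum>j2\<in>D. A i1 j1 * B i2 j2 * W (j1,j2) k)"
      by (simp add: sum_distrib_left mult.assoc)
    also have "\<dots> = (\<Sum>t\<in>?I. A i1 (fst t) * B i2 (snd t) * W t k)"
      by (simp add: sum.cartesian_product')
    finally show ?thesis using s by simp
  qed
  have "ip ?J ?psi (app ?J (opA A) (app ?J (opB B) ?psi))
      = (\<Sum>s\<in>?I. \<Sum>k\<in>?I. cnj (W s k) * app ?J (opA A) (app ?J (opB B) ?psi) (s,k))"
    by (simp add: ip_def sum.cartesian_product')
  also have "\<dots> = (\<Sum>s\<in>?I. \<Sum>k\<in>?I. \<Sum>t\<in>?I. cnj (W s k) * (A (fst s) (fst t) * B (snd s) (snd t) * W t k))"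
    by (intro sum.cong refl) (simp add: X sum_distrib_left)
  also have "\<dots> = (\<Sum>s\<in>?I. \<Sum>t\<in>?I. \<Sum>k\<in>?I. A (fst s) (fst t) * B (snd s) (snd t) * (W t k * cnj (W s k)))"
  proof (rule sum.cong[OF refl])
    fix s
    have "(\<Sum>k\<in>?I. \<Sum>t\<in>?I. cnj (W s k) * (A (fst s) (fst t) * B (snd s) (snd t) * W t k))
        = (\<Sum>t\<in>?I. \<Sum>k\<in>?I. cnj (W s k) * (A (fst s) (fst t) * B (snd s) (snd t) * W t k))"
      by (rule sum.swap)
    then show "(\<Sum>k\<in>?I. \<Sum>t\<in>?I. cnj (W s k) * (A (fst s) (fst t) * B (snd s) (snd t) * W t k))
        = (\<Sum>t\<in>?I. \<Sum>k\<in>?I. A (fst s) (fst t) * B (snd s) (snd t) * (W t k * cnj (W s k)))"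
      by (simp add: mult.commute mult.left_commute)
  qed
  also have "\<dots> = (\<Sum>s\<in>?I. \<Sum>t\<in>?I. A (fst s) (fst t) * B (snd s) (snd t) * rho t s)"
  proof (intro sum.cong refl)
    fix s t assume "s \<in> ?I" "t \<in> ?I"
    then have "rho t s = (\<Sum>k\<in>?I. W t k * cnj (W s k))" using W by blast
    then show "(\<Sum>k\<in>?I. A (fst s) (fst t) * B (snd s) (snd t) * (W t k * cnj (W s k))) =
        A (fst s) (fst t) * B (snd s) (snd t) * rho t s" by (simp add: sum_distrib_left)
  qed
  finally show ?thesis .
qed

lemma tensor_fst: "tensor P Q s t = P (fst s) (fst t) * Q (snd s) (snd t)"
  by (cases s, cases t) (simp add: tensor_def)

lemma trace_form: "ctrace_on I (cmult_on I (tensor P Q) rho) = (\<Sum>s\<in>I. \<Sum>t\<in>I. P (fst s) (fst t) * Q (snd s) (snd t) * rho t s)"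
  by (simp add: ctrace_on_def cmult_on_def tensor_fst)

lemma sum_outcomes: "(\<Sum>a\<in>outcomes. f a) = f (-1) + f 1"
  by (simp add: outcomes_def)

lemma qrep_bound:
  fixes C :: "real^'n^'n"
  assumes q: "has_qrep d (p_C C)" and e: "C extreme_point_of elliptope"
  shows "4 ^ (rank C div 2) \<le> d ^ 4"
proof -
  let ?D = "{..<d}"
  let ?I = "?D \<times> ?D"
  let ?J = "?I \<times> ?I"
  from q obtain rho :: "(nat \<times> nat) cmat" and M N :: "'n \<Rightarrow> int \<Rightarrow> nat cmat"
    where rpsd: "cpsd_on ?I rho" and rtr: "ctrace_on ?I rho = 1"
      and pM: "\<And>x. is_povm d (M x)" and pN: "\<And>y. is_povm d (N y)"
      and pr: "\<And>a b x y. a \<in> outcomes \<Longrightarrow> b \<in> outcomes \<Longrightarrow>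
        complex_of_real (p_C C a b x y) = ctrace_on ?I (cmult_on ?I (tensor (M x a) (N y b)) rho)"
    unfolding has_qrep_def by blast
  have fD: "finite ?D" by simp
  have fI: "finite ?I" by simp
  obtain W where W: "\<forall>s\<in>?I. \<forall>t\<in>?I. rho s t = (\<Sum>k\<in>?I. W s k * cnj (W t k))"
    using cholesky[OF fI rpsd] by blast
  define psi where "psi = (\<lambda>p. if p \<in> ?J then W (fst p) (snd p) else 0)"
  define A where "A x = (\<lambda>s t. M x 1 s t - M x (-1) s t)" for x
  define B where "B y = (\<lambda>s t. N y 1 s t - N y (-1) s t)" for y
  have o1: "1 \<in> outcomes" "-1 \<in> outcomes" by (auto simp: outcomes_def)
  have Mpsd: "cpsd_on ?D (M x a)" if "a \<in> outcomes" for x a using pM[of x] that by (simp add: is_povm_def)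
  have Npsd: "cpsd_on ?D (N y a)" if "a \<in> outcomes" for y a using pN[of y] that by (simp add: is_povm_def)
  have Msum: "\<forall>s\<in>?D. \<forall>t\<in>?D. M x 1 s t + M x (-1) s t = (if s = t then 1 else 0)" for x
    using pM[of x] by (auto simp: is_povm_def sum_outcomes cident_def add.commute)
  have Nsum: "\<forall>s\<in>?D. \<forall>t\<in>?D. N y 1 s t + N y (-1) s t = (if s = t then 1 else 0)" for y
    using pN[of y] by (auto simp: is_povm_def sum_outcomes cident_def add.commute)
  have hermP: "\<forall>i\<in>?D. \<forall>j\<in>?D. P j i = cnj (P i j)" if "cpsd_on ?D P" for P
    using that unfolding cpsd_on_def hermitian_on_def by blast
  have hermA: "\<forall>i\<in>?D. \<forall>j\<in>?D. A x j i = cnj (A x i j)" for x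
  proof (intro ballI)
    fix i j assume ij: "i \<in> ?D" "j \<in> ?D"
    have "M x 1 j i = cnj (M x 1 i j)" "M x (-1) j i = cnj (M x (-1) i j)"
      using hermP[OF Mpsd[OF o1(1)]] hermP[OF Mpsd[OF o1(2)]] ij by blast+
    then show "A x j i = cnj (A x i j)" by (simp add: A_def)
  qed
  have hermB: "\<forall>i\<in>?D. \<forall>j\<in>?D. B x j i = cnj (B x i j)" for x
  proof (intro ballI)
    fix i j assume ij: "i \<in> ?D" "j \<in> ?D"
    have "N x 1 j i = cnj (N x 1 i j)" "N x (-1) j i = cnj (N x (-1) i j)"
      using hermP[OF Npsd[OF o1(1)]] hermP[OF Npsd[OF o1(2)]] ij by blast+
    then show "B x j i = cnj (B x i j)" by (simp add: B_def)
  qed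
  interpret ts: tsir ?J psi "\<lambda>x. opA (A x)" "\<lambda>y. opB (B y)" C
  proof
    show "finite ?J" by simp
    show "psi \<in> Sp ?J" by (simp add: Sp_def psi_def)
    show "ip ?J psi psi = 1"
    proof -
      have "ip ?J psi psi = (\<Sum>s\<in>?I. \<Sum>k\<in>?I. W s k * cnj (W s k))"
        by (simp add: ip_def psi_def sum.cartesian_product' mult.commute)
      also have "\<dots> = (\<Sum>s\<in>?I. rho s s)"
      proof (rule sum.cong[OF refl])
        fix s assume "s \<in> ?I"
        then have "rho s s = (\<Sum>k\<in>?I. W s k * cnj (W s k))" using W by blast
        then show "(\<Sum>k\<in>?I. W s k * cnj (W s k)) = rho s s" by simp
      qed
      also have "\<dots> = 1" using rtr by (simp add: ctrace_on_def)
      finally show ?thesis .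
    qed
    show "herm ?J (opA (A x))" for x by (rule herm_opA[OF hermA])
    show "herm ?J (opB (B x))" for x by (rule herm_opB[OF hermB])
    show "Re (ip ?J (app ?J (opA (A x)) v) (app ?J (opA (A x)) v)) \<le> Re (ip ?J v v)" for x v
      by (rule contr_opA[OF fD fI]) (unfold A_def, rule povm_contr[OF fD Mpsd[OF o1(1)] Mpsd[OF o1(2)] Msum])
    show "Re (ip ?J (app ?J (opB (B x)) v) (app ?J (opB (B x)) v)) \<le> Re (ip ?J v v)" for x v
      by (rule contr_opB[OF fD fI]) (unfold B_def, rule povm_contr[OF fD Npsd[OF o1(1)] Npsd[OF o1(2)] Nsum])
    show "app ?J (opA (A x)) (app ?J (opB (B y)) v) = app ?J (opB (B y)) (app ?J (opA (A x)) v)" for x y v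
      by (rule comm_opAB[OF fD fI])
    show "complex_of_real (C$x$y) = ip ?J psi (app ?J (opA (A x)) (app ?J (opB (B y)) psi))" for x y
    proof -
      define T where "T P Q = (\<Sum>s\<in>?I. \<Sum>t\<in>?I. P (fst s) (fst t) * Q (snd s) (snd t) * rho t s)" for P Q :: "nat cmat"
      have Tp: "complex_of_real (p_C C a b x y) = T (M x a) (N y b)" if "a \<in> outcomes" "b \<in> outcomes" for a b
        using pr[OF that, of x y] by (simp add: trace_form T_def)
      have "C$x$y = p_C C 1 1 x y - p_C C 1 (-1) x y - p_C C (-1) 1 x y + p_C C (-1) (-1) x y"
        by (simp add: p_C_def field_simps)
      then have "complex_of_real (C$x$y) = T (M x 1) (N y 1) - T (M x 1) (N y (-1)) - T (M x (-1)) (N y 1) + T (M x (-1)) (N y (-1))"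
        using Tp[OF o1(1) o1(1)] Tp[OF o1(1) o1(2)] Tp[OF o1(2) o1(1)] Tp[OF o1(2) o1(2)] by simp
      also have "\<dots> = T (A x) (B y)"
        by (simp add: T_def A_def B_def algebra_simps sum_subtractf sum.distrib)
      also have "\<dots> = ip ?J psi (app ?J (opA (A x)) (app ?J (opB (B y)) psi))"
        unfolding T_def psi_def by (rule corr_opAB[OF fD W, symmetric])
      finally show ?thesis .
    qed
    show "C extreme_point_of elliptope" by (rule e)
  qed
  have "4 ^ (rank C div 2) \<le> card ?J" by (rule ts.tsir_bound)
  also have "card ?J = d ^ 4" by (simp add: card_cartesian_product power4_eq_xxxx)
  finally show ?thesis .
qed

lemma sum_split2: "(\<Sum>j<2*h. f j) = (\<Sum>j<h. f j) + (\<Sum>j<h. f (j + h)) " for f :: "nat \<Rightarrow> 'a::comm_monoid_add"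
proof -
  have "(\<Sum>j<2*h. f j) = sum f {0..<h} + sum f {h..<2*h}"
    using sum.atLeastLessThan_concat[of 0 h "2*h" f] by (simp add: atLeast0LessThan)
  also have "sum f {h..<2*h} = sum f {0+h..<h+h}" by (simp add: mult_2)
  also have "\<dots> = (\<Sum>j<h. f (j + h))" using sum.shift_bounds_nat_ivl[of f 0 h h] by (simp only: atLeast0LessThan)
  finally show ?thesis by (simp add: atLeast0LessThan)
qed

definition mm :: "nat \<Rightarrow> (nat \<Rightarrow> nat \<Rightarrow> real) \<Rightarrow> (nat \<Rightarrow> nat \<Rightarrow> real) \<Rightarrow> nat \<Rightarrow> nat \<Rightarrow> real" where
  "mm n X Y = (\<lambda>a b. \<Sum>j<n. X a j * Y j b)"

definition blk :: "nat \<Rightarrow> (nat \<Rightarrow> nat \<Rightarrow> real) \<Rightarrow> (nat \<Rightarrow> nat \<Rightarrow> real) \<Rightarrow> (nat \<Rightarrow> nat \<Rightarrow> real) \<Rightarrow> (nat \<Rightarrow> nat \<Rightarrow> real) \<Rightarrow> nat \<Rightarrow> nat \<Rightarrow> real" where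
  "blk h P Q R S = (\<lambda>a b. if a < h then (if b < h then P a b else Q a (b - h)) else (if b < h then R (a - h) b else S (a - h) (b - h)))"

definition idm :: "nat \<Rightarrow> nat \<Rightarrow> real" where "idm a b = (if a = b then 1 else 0)"

lemma mm_blk:
  assumes "a < 2*h" "b < 2*h"
  shows "mm (2*h) (blk h P Q R S) (blk h P' Q' R' S') a b =
    blk h (\<lambda>a b. mm h P P' a b + mm h Q R' a b) (\<lambda>a b. mm h P Q' a b + mm h Q S' a b)
          (\<lambda>a b. mm h R P' a b + mm h S R' a b) (\<lambda>a b. mm h R Q' a b + mm h S S' a b) a b"
  using assms by (simp add: mm_def sum_split2 blk_def)

lemma blk_eqI:
  assumes "\<And>a b. a < h \<Longrightarrow> b < h \<Longrightarrow> P a b = P' a b" "\<And>a b. a < h \<Longrightarrow> b < h \<Longrightarrow> Q a b = Q' a b"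
    "\<And>a b. a < h \<Longrightarrow> b < h \<Longrightarrow> R a b = R' a b" "\<And>a b. a < h \<Longrightarrow> b < h \<Longrightarrow> S a b = S' a b"
    "a < 2*h" "b < 2*h"
  shows "blk h P Q R S a b = blk h P' Q' R' S' a b"
  using assms by (auto simp: blk_def)

lemma idm_blk: "a < 2*h \<Longrightarrow> b < 2*h \<Longrightarrow> idm a b = blk h idm (\<lambda>a b. 0) (\<lambda>a b. 0) idm a b"
  by (auto simp: blk_def idm_def)

lemma mm_zero_left[simp]: "mm h (\<lambda>a b. 0) X a b = 0" by (simp add: mm_def)
lemma mm_zero_right[simp]: "mm h X (\<lambda>a b. 0) a b = 0" by (simp add: mm_def)
lemma mm_id_left: "a < h \<Longrightarrow> mm h idm X a b = X a b"
proof -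
  assume "a < h"
  have eq: "(\<lambda>j. idm a j * X j b) = (\<lambda>j. if j = a then X a b else 0)" by (auto simp: idm_def fun_eq_iff)
  show ?thesis unfolding mm_def eq using \<open>a < h\<close> by simp
qed
lemma mm_id_right: "b < h \<Longrightarrow> mm h X idm a b = X a b"
proof -
  assume "b < h"
  have eq: "(\<lambda>j. X a j * idm j b) = (\<lambda>j. if j = b then X a b else 0)" by (auto simp: idm_def fun_eq_iff)
  show ?thesis unfolding mm_def eq using \<open>b < h\<close> by simp
qed
lemma blk_add: "blk h P Q R S a b + blk h P' Q' R' S' a b = blk h (\<lambda>a b. P a b + P' a b) (\<lambda>a b. Q a b + Q' a b) (\<lambda>a b. R a b + R' a b) (\<lambda>a b. S a b + S' a b) a b"
  by (simp add: blk_def)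
lemma mm_neg_left: "mm h (\<lambda>a b. - X a b) Y a b = - mm h X Y a b" by (simp add: mm_def sum_negf)
lemma mm_neg_right: "mm h X (\<lambda>a b. - Y a b) a b = - mm h X Y a b" by (simp add: mm_def sum_negf)

fun cg :: "nat \<Rightarrow> nat \<Rightarrow> nat \<Rightarrow> nat \<Rightarrow> real" where
  "cg 0 i = (\<lambda>a b. 0)"
| "cg (Suc m) i = (if i < m then blk (2^m) (cg m i) (\<lambda>a b. 0) (\<lambda>a b. 0) (\<lambda>a b. - cg m i a b)
     else if i = m then blk (2^m) (\<lambda>a b. 0) idm idm (\<lambda>a b. 0) else (\<lambda>a b. 0))"

lemma cg_sym: "cg m i a b = cg m i b a"
proof (induction m arbitrary: i a b)
  case 0 then show ?case by simp
next
  case (Suc m) then show ?case by (auto simp: blk_def idm_def)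
qed

lemma cg_trace: "i < m \<Longrightarrow> sum (\<lambda>a. cg m i a a) {..<2^m} = 0"
proof (induction m arbitrary: i)
  case 0 then show ?case by simp
next
  case (Suc m)
  have s: "sum f {..<2^Suc m} = sum f {..<2^m} + sum (\<lambda>a. f (a + 2^m)) {..<2^m}" for f :: "nat \<Rightarrow> real"
    using sum_split2[where h = "2^m" and f = f] by simp
  show ?case
  proof (cases "i < m")
    case True then show ?thesis using Suc.IH[OF True] by (simp add: sum_split2 blk_def sum_negf)
  next
    case False then have "i = m" using Suc.prems by simp
    then show ?thesis by (simp add: sum_split2 blk_def)
  qed
qed

lemma cg_anti:
  "i < m \<Longrightarrow> k < m \<Longrightarrow> a < 2^m \<Longrightarrow> b < 2^m \<Longrightarrow>
   mm (2^m) (cg m i) (cg m k) a b + mm (2^m) (cg m k) (cg m i) a b = (if i = k then 2 * idm a b else 0)"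
proof (induction m arbitrary: i k a b)
  case 0 then show ?case by simp
next
  case (Suc m)
  let ?h = "2^m :: nat"
  let ?z = "\<lambda>a b. 0::real"
  have ab: "a < 2*?h" "b < 2*?h" using Suc.prems by auto
  have e2: "(2::nat)^Suc m = 2 * ?h" by simp
  have gl: "cg (Suc m) j = blk ?h (cg m j) ?z ?z (\<lambda>a b. - cg m j a b)" if "j < m" for j
    using that by simp
  have gm: "cg (Suc m) m = blk ?h ?z idm idm ?z" by simp
  have fin: "blk ?h (\<lambda>a b. if i = k then 2 * idm a b else 0) ?z ?z (\<lambda>a b. if i = k then 2 * idm a b else 0) a b
      = (if i = k then 2 * idm a b else 0)"
    using ab by (auto simp: blk_def idm_def)
  show ?case
  proof (cases "i < m"; cases "k < m")
    assume i: "i < m" and k: "k < m"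
    have "mm (2*?h) (cg (Suc m) i) (cg (Suc m) k) a b + mm (2*?h) (cg (Suc m) k) (cg (Suc m) i) a b
      = blk ?h (\<lambda>a b. (mm ?h (cg m i) (cg m k) a b + mm ?h ?z ?z a b) + (mm ?h (cg m k) (cg m i) a b + mm ?h ?z ?z a b))
           (\<lambda>a b. (mm ?h (cg m i) ?z a b + mm ?h ?z (\<lambda>a b. - cg m k a b) a b) + (mm ?h (cg m k) ?z a b + mm ?h ?z (\<lambda>a b. - cg m i a b) a b))
           (\<lambda>a b. (mm ?h ?z (cg m k) a b + mm ?h (\<lambda>a b. - cg m i a b) ?z a b) + (mm ?h ?z (cg m i) a b + mm ?h (\<lambda>a b. - cg m k a b) ?z a b))
           (\<lambda>a b. (mm ?h ?z ?z a b + mm ?h (\<lambda>a b. - cg m i a b) (\<lambda>a b. - cg m k a b) a b) + (mm ?h ?z ?z a b + mm ?h (\<lambda>a b. - cg m k a b) (\<lambda>a b. - cg m i a b) a b)) a b"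
      by (simp only: gl[OF i] gl[OF k] mm_blk[OF ab] blk_add)
    also have "\<dots> = blk ?h (\<lambda>a b. if i = k then 2 * idm a b else 0) ?z ?z (\<lambda>a b. if i = k then 2 * idm a b else 0) a b"
      by (rule blk_eqI) (use Suc.IH[OF i k] ab in \<open>auto simp: mm_neg_left mm_neg_right\<close>)
    finally show ?thesis using fin by (simp only: e2)
  next
    assume i: "i < m" and k: "\<not> k < m"
    then have km: "k = m" using Suc.prems by simp
    have "mm (2*?h) (cg (Suc m) i) (cg (Suc m) k) a b + mm (2*?h) (cg (Suc m) k) (cg (Suc m) i) a b
      = blk ?h (\<lambda>a b. (mm ?h (cg m i) ?z a b + mm ?h ?z idm a b) + (mm ?h ?z (cg m i) a b + mm ?h idm ?z a b))
           (\<lambda>a b. (mm ?h (cg m i) idm a b + mm ?h ?z ?z a b) + (mm ?h ?z ?z a b + mm ?h idm (\<lambda>a b. - cg m i a b) a b))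
           (\<lambda>a b. (mm ?h ?z ?z a b + mm ?h (\<lambda>a b. - cg m i a b) idm a b) + (mm ?h idm (cg m i) a b + mm ?h ?z ?z a b))
           (\<lambda>a b. (mm ?h ?z idm a b + mm ?h (\<lambda>a b. - cg m i a b) ?z a b) + (mm ?h idm ?z a b + mm ?h ?z (\<lambda>a b. - cg m i a b) a b)) a b"
      by (simp only: gl[OF i] km gm mm_blk[OF ab] blk_add)
    also have "\<dots> = blk ?h ?z ?z ?z ?z a b"
      by (rule blk_eqI) (use ab in \<open>auto simp: mm_neg_left mm_neg_right mm_id_left mm_id_right\<close>)
    finally show ?thesis using i km ab by (simp only: e2) (simp add: blk_def)
  next
    assume i: "\<not> i < m" and k: "k < m"
    then have im: "i = m" using Suc.prems by simp
    have "mm (2*?h) (cg (Suc m) i) (cg (Suc m) k) a b + mm (2*?h) (cg (Suc m) k) (cg (Suc m) i) a b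
      = blk ?h (\<lambda>a b. (mm ?h ?z (cg m k) a b + mm ?h idm ?z a b) + (mm ?h (cg m k) ?z a b + mm ?h ?z idm a b))
           (\<lambda>a b. (mm ?h ?z ?z a b + mm ?h idm (\<lambda>a b. - cg m k a b) a b) + (mm ?h (cg m k) idm a b + mm ?h ?z ?z a b))
           (\<lambda>a b. (mm ?h idm (cg m k) a b + mm ?h ?z ?z a b) + (mm ?h ?z ?z a b + mm ?h (\<lambda>a b. - cg m k a b) idm a b))
           (\<lambda>a b. (mm ?h idm ?z a b + mm ?h ?z (\<lambda>a b. - cg m k a b) a b) + (mm ?h ?z idm a b + mm ?h (\<lambda>a b. - cg m k a b) ?z a b)) a b"
      by (simp only: gl[OF k] im gm mm_blk[OF ab] blk_add)
    also have "\<dots> = blk ?h ?z ?z ?z ?z a b"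
      by (rule blk_eqI) (use ab in \<open>auto simp: mm_neg_left mm_neg_right mm_id_left mm_id_right\<close>)
    finally show ?thesis using k im ab by (simp only: e2) (simp add: blk_def)
  next
    assume i: "\<not> i < m" and k: "\<not> k < m"
    then have im: "i = m" "k = m" using Suc.prems by auto
    have "mm (2*?h) (cg (Suc m) i) (cg (Suc m) k) a b + mm (2*?h) (cg (Suc m) k) (cg (Suc m) i) a b
      = blk ?h (\<lambda>a b. (mm ?h ?z ?z a b + mm ?h idm idm a b) + (mm ?h ?z ?z a b + mm ?h idm idm a b))
           (\<lambda>a b. (mm ?h ?z idm a b + mm ?h idm ?z a b) + (mm ?h ?z idm a b + mm ?h idm ?z a b))
           (\<lambda>a b. (mm ?h idm ?z a b + mm ?h ?z idm a b) + (mm ?h idm ?z a b + mm ?h ?z idm a b))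
           (\<lambda>a b. (mm ?h idm idm a b + mm ?h ?z ?z a b) + (mm ?h idm idm a b + mm ?h ?z ?z a b)) a b"
      by (simp only: im gm mm_blk[OF ab] blk_add)
    also have "\<dots> = blk ?h (\<lambda>a b. if i = k then 2 * idm a b else 0) ?z ?z (\<lambda>a b. if i = k then 2 * idm a b else 0) a b"
      by (rule blk_eqI) (use ab im in \<open>auto simp: mm_id_left\<close>)
    finally show ?thesis using fin by (simp only: e2)
  qed
qed

lemma gram_vectors:
  fixes C :: "real^'n^'n"
  assumes "C \<in> elliptope"
  shows "\<exists>r u. \<forall>x y. C$x$y = (\<Sum>i<(r::nat). u x i * u y i)"
proof -
  have psd: "real_psd C" using assms by (simp add: elliptope_def)
  have sym: "transpose C = C" using psd by (simp add: real_psd_def)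
  obtain cs where cs: "\<forall>i<rank C. \<forall>j<rank C. cs i \<bullet> (C *v cs j) = (if i = j then 1 else 0)"
    using gram_schmidt[OF psd, of "rank C"] by auto
  define u where "u x i = (C *v cs i)$x" for x i
  have "C$x$y = (\<Sum>i<rank C. u x i * u y i)" for x y
  proof -
    have "C$x$y = (C *v axis y 1)$x" by (simp add: matrix_vector_mult_basis column_def)
    also have "C *v axis y 1 = (\<Sum>i<rank C. (cs i \<bullet> (C *v axis y 1)) *\<^sub>R (C *v cs i))"
      by (rule decomp[OF psd cs])
    finally have e: "C$x$y = (\<Sum>i<rank C. (cs i \<bullet> (C *v axis y 1)) *\<^sub>R (C *v cs i))$x" .
    have coef: "cs i \<bullet> (C *v axis y 1) = u y i" for i
      unfolding u_def sym_dot[OF sym] by (simp add: inner_axis)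
    show ?thesis unfolding e coef by (simp add: u_def mult.commute)
  qed
  then have "\<forall>x y. C$x$y = (\<Sum>i<rank C. u x i * u y i)" by blast
  then show ?thesis by blast
qed

lemma mm_lin:
  "mm n (\<lambda>a b. \<Sum>i<r. f i * G i a b) (\<lambda>a b. \<Sum>k<r. g k * H k a b) a b = (\<Sum>i<r. \<Sum>k<r. f i * g k * mm n (G i) (H k) a b)"
proof -
  have "mm n (\<lambda>a b. \<Sum>i<r. f i * G i a b) (\<lambda>a b. \<Sum>k<r. g k * H k a b) a b
     = (\<Sum>j<n. (\<Sum>i<r. f i * G i a j) * (\<Sum>k<r. g k * H k j b))"
    by (simp add: mm_def)
  also have "\<dots> = (\<Sum>j<n. \<Sum>i<r. \<Sum>k<r. f i * g k * (G i a j * H k j b))"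
    by (simp add: sum_product ac_simps)
  also have "\<dots> = (\<Sum>i<r. \<Sum>j<n. \<Sum>k<r. f i * g k * (G i a j * H k j b))" by (rule sum.swap)
  also have "\<dots> = (\<Sum>i<r. \<Sum>k<r. \<Sum>j<n. f i * g k * (G i a j * H k j b))"
    by (rule sum.cong[OF refl]) (rule sum.swap)
  also have "\<dots> = (\<Sum>i<r. \<Sum>k<r. f i * g k * mm n (G i) (H k) a b)"
    by (simp add: mm_def sum_distrib_left)
  finally show ?thesis .
qed

definition Ax :: "nat \<Rightarrow> (nat \<Rightarrow> real) \<Rightarrow> nat \<Rightarrow> nat \<Rightarrow> real" where
  "Ax r w = (\<lambda>a b. \<Sum>i<r. w i * cg r i a b)"

lemma Ax_sym: "Ax r w a b = Ax r w b a"
  by (simp add: Ax_def cg_sym)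

lemma Ax_trace: "(\<Sum>a<2^r. Ax r w a a) = 0"
proof -
  have "(\<Sum>a<2^r. Ax r w a a) = (\<Sum>i<r. w i * (\<Sum>a<2^r. cg r i a a))"
    by (simp add: Ax_def sum_distrib_left) (rule sum.swap)
  also have "\<dots> = 0" using cg_trace by simp
  finally show ?thesis .
qed

lemma Ax_anti:
  assumes "a < 2^r" "b < 2^r"
  shows "mm (2^r) (Ax r v) (Ax r w) a b + mm (2^r) (Ax r w) (Ax r v) a b = 2 * (\<Sum>i<r. v i * w i) * idm a b"
proof -
  have "mm (2^r) (Ax r v) (Ax r w) a b + mm (2^r) (Ax r w) (Ax r v) a b
      = (\<Sum>i<r. \<Sum>k<r. v i * w k * mm (2^r) (cg r i) (cg r k) a b) + (\<Sum>i<r. \<Sum>k<r. w i * v k * mm (2^r) (cg r i) (cg r k) a b)"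
    unfolding Ax_def by (simp only: mm_lin)
  also have "(\<Sum>i<r. \<Sum>k<r. w i * v k * mm (2^r) (cg r i) (cg r k) a b) = (\<Sum>i<r. \<Sum>k<r. v i * w k * mm (2^r) (cg r k) (cg r i) a b)"
    by (subst sum.swap) (simp add: mult.commute)
  also have "(\<Sum>i<r. \<Sum>k<r. v i * w k * mm (2^r) (cg r i) (cg r k) a b) + \<dots>
      = (\<Sum>i<r. \<Sum>k<r. v i * w k * (mm (2^r) (cg r i) (cg r k) a b + mm (2^r) (cg r k) (cg r i) a b))"
    by (simp add: sum.distrib distrib_left)
  also have "\<dots> = (\<Sum>i<r. \<Sum>k<r. v i * w k * (if i = k then 2 * idm a b else 0))"
    using cg_anti assms by (intro sum.cong refl) simp
  also have "\<dots> = (\<Sum>i<r. v i * w i * (2 * idm a b))"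
    by (intro sum.cong refl) (simp add: if_distrib cong: if_cong)
  also have "\<dots> = 2 * (\<Sum>i<r. v i * w i) * idm a b"
    by (simp add: sum_distrib_left sum_distrib_right ac_simps)
  finally show ?thesis .
qed

lemma mm_trace_comm: "(\<Sum>a<n. mm n X Y a a) = (\<Sum>a<n. mm n Y X a a)"
  unfolding mm_def by (subst sum.swap) (simp add: mult.commute)

lemma qf_idem:
  fixes P :: "nat \<Rightarrow> nat \<Rightarrow> real"
  assumes sym: "\<And>s t. s < n \<Longrightarrow> t < n \<Longrightarrow> P s t = P t s"
    and idem: "\<And>s t. s < n \<Longrightarrow> t < n \<Longrightarrow> mm n P P s t = P s t"
  shows "0 \<le> Re (qf {..<n} (\<lambda>s t. complex_of_real (P s t)) v)"
proof -
  define w where "w j = (\<Sum>t<n. complex_of_real (P j t) * v t)" for j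
  have "qf {..<n} (\<lambda>s t. complex_of_real (P s t)) v = (\<Sum>s<n. \<Sum>t<n. cnj (v s) * complex_of_real (mm n P P s t) * v t)"
    unfolding qf_def using idem by (intro sum.cong refl) simp
  also have "\<dots> = (\<Sum>s<n. \<Sum>t<n. \<Sum>j<n. complex_of_real (P j s) * cnj (v s) * (complex_of_real (P j t) * v t))"
    unfolding mm_def using sym
    by (intro sum.cong refl) (simp add: sum_distrib_left sum_distrib_right mult.assoc mult.left_commute)
  also have "\<dots> = (\<Sum>j<n. \<Sum>s<n. \<Sum>t<n. complex_of_real (P j s) * cnj (v s) * (complex_of_real (P j t) * v t))"
    by (subst sum.swap, rule sum.cong[OF refl], rule sum.swap)
  also have "\<dots> = (\<Sum>j<n. cnj (w j) * w j)"
    by (simp add: w_def sum_product cnj_sum)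
  finally have "qf {..<n} (\<lambda>s t. complex_of_real (P s t)) v = ip {..<n} w w" by (simp add: ip_def)
  then show ?thesis using ip_self_ge0 by simp
qed

lemma diag_sum: "(\<Sum>t\<in>I\<times>I. if fst t = snd t then g t else 0) = (\<Sum>k\<in>I. g (k,k))" if "finite I"
  using that by (simp add: sum.cartesian_product' if_distrib cong: if_cong)

lemma mm_comb_left: "mm n (\<lambda>s t. \<alpha> * X s t + \<beta> * Y s t) Z a b = \<alpha> * mm n X Z a b + \<beta> * mm n Y Z a b"
  by (simp add: mm_def sum.distrib sum_distrib_left distrib_right mult.assoc)
lemma mm_comb_right: "mm n Z (\<lambda>s t. \<alpha> * X s t + \<beta> * Y s t) a b = \<alpha> * mm n Z X a b + \<beta> * mm n Z Y a b"
  by (simp add: mm_def sum.distrib sum_distrib_left distrib_left mult.left_commute)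

lemma exists_qrep:
  fixes C :: "real^'n^'n"
  assumes Cell: "C \<in> elliptope"
  shows "\<exists>D. has_qrep D (p_C C)"
proof -
  obtain r u where gv: "\<And>x y. C$x$y = (\<Sum>i<(r::nat). u x i * u y i)" using gram_vectors[OF Cell] by blast
  have Cd: "C$x$x = 1" for x using Cell by (simp add: elliptope_def)
  define n where "n = (2::nat)^r"
  have n0: "0 < n" by (simp add: n_def)
  define A where "A x = Ax r (u x)" for x
  have Asym: "A x s t = A x t s" for x s t by (simp add: A_def Ax_sym)
  have Atr: "(\<Sum>a<n. A x a a) = 0" for x unfolding A_def n_def by (rule Ax_trace)
  have Aanti: "mm n (A x) (A y) a b + mm n (A y) (A x) a b = 2 * C$x$y * idm a b" if "a < n" "b < n" for x y a b
    using Ax_anti[of a r b "u x" "u y"] that by (simp add: A_def n_def gv)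
  have Asq: "mm n (A x) (A x) a b = idm a b" if "a < n" "b < n" for x a b
    using Aanti[OF that, of x x] Cd[of x] by simp
  define P where "P x (a::int) = (\<lambda>s t. (1/2) * idm s t + (real_of_int a / 2) * A x s t)" for x a
  have Psym: "P x a s t = P x a t s" for x a s t by (simp add: P_def Asym idm_def)
  have Pidem: "mm n (P x a) (P x a) s t = P x a s t" if "a \<in> outcomes" "s < n" "t < n" for x a s t
  proof -
    have a2: "real_of_int a * real_of_int a = 1" using that(1) by (auto simp: outcomes_def)
    have "mm n (P x a) (P x a) s t = (1/2) * ((1/2) * mm n idm idm s t + (real_of_int a / 2) * mm n idm (A x) s t)
        + (real_of_int a / 2) * ((1/2) * mm n (A x) idm s t + (real_of_int a / 2) * mm n (A x) (A x) s t)"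
      unfolding P_def by (simp only: mm_comb_left mm_comb_right)
    also have "\<dots> = (1/2) * ((1/2) * idm s t + (real_of_int a / 2) * A x s t)
        + (real_of_int a / 2) * ((1/2) * A x s t + (real_of_int a / 2) * idm s t)"
      using that by (simp add: mm_id_left mm_id_right Asq)
    also have "\<dots> = P x a s t"
    proof -
      have aa: "real_of_int a * (real_of_int a * z) = z" for z using a2 by (simp add: mult.assoc[symmetric])
      show ?thesis by (simp add: P_def algebra_simps aa)
    qed
    finally show ?thesis .
  qed
  define Mq where "Mq x a = (\<lambda>s t. complex_of_real (P x a s t))" for x a
  define rho :: "(nat \<times> nat) cmat" where
    "rho = (\<lambda>s t. if fst s = snd s \<and> fst t = snd t then complex_of_real (1 / real n) else 0)"
  let ?I = "{..<n}"
  let ?I2 = "?I \<times> ?I"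
  have psdM: "cpsd_on ?I (Mq x a)" if "a \<in> outcomes" for x a
    unfolding cpsd_on_qf
  proof
    show "hermitian_on ?I (Mq x a)" unfolding hermitian_on_def Mq_def by (simp add: Psym)
    show "\<forall>v. 0 \<le> Re (qf ?I (Mq x a) v)"
      unfolding Mq_def by (intro allI qf_idem) (auto simp: Psym Pidem that)
  qed
  have povm: "is_povm n (Mq x)" for x
    unfolding is_povm_def
  proof
    show "\<forall>a\<in>outcomes. cpsd_on ?I (Mq x a)" using psdM by blast
    show "\<forall>i<n. \<forall>j<n. (\<Sum>a\<in>outcomes. Mq x a i j) = cident i j"
      by (simp add: sum_outcomes Mq_def P_def cident_def idm_def)
  qed
  have rpsd: "cpsd_on ?I2 rho"
    unfolding cpsd_on_qf
  proof
    show "hermitian_on ?I2 rho" by (auto simp: hermitian_on_def rho_def)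
    show "\<forall>v. 0 \<le> Re (qf ?I2 rho v)"
    proof
      fix v :: "nat \<times> nat \<Rightarrow> complex"
      define S where "S = (\<Sum>t\<in>?I2. if fst t = snd t then v t else 0)"
      have "qf ?I2 rho v = (\<Sum>s\<in>?I2. \<Sum>t\<in>?I2. complex_of_real (1 / real n) *
          ((if fst s = snd s then cnj (v s) else 0) * (if fst t = snd t then v t else 0)))"
        unfolding qf_def rho_def by (intro sum.cong refl) auto
      also have "\<dots> = complex_of_real (1 / real n) * (\<Sum>s\<in>?I2. \<Sum>t\<in>?I2.
          (if fst s = snd s then cnj (v s) else 0) * (if fst t = snd t then v t else 0))"
        by (simp only: sum_distrib_left)
      also have "(\<Sum>s\<in>?I2. \<Sum>t\<in>?I2. (if fst s = snd s then cnj (v s) else 0) * (if fst t = snd t then v t else 0))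
          = (\<Sum>s\<in>?I2. if fst s = snd s then cnj (v s) else 0) * S"
        unfolding S_def by (rule sum_product[symmetric])
      also have "(\<Sum>s\<in>?I2. if fst s = snd s then cnj (v s) else 0) = cnj S"
        unfolding S_def cnj_sum by (intro sum.cong refl) simp
      finally have "qf ?I2 rho v = complex_of_real (1 / real n) * (cnj S * S)" .
      moreover have "cnj S * S = complex_of_real ((cmod S)\<^sup>2)" by (metis complex_norm_square mult.commute)
      ultimately show "0 \<le> Re (qf ?I2 rho v)" by simp
    qed
  qed
  have rtr: "ctrace_on ?I2 rho = 1"
  proof -
    have "ctrace_on ?I2 rho = (\<Sum>t\<in>?I2. if fst t = snd t then complex_of_real (1 / real n) else 0)"
      unfolding ctrace_on_def rho_def by (intro sum.cong refl) auto
    also have "\<dots> = (\<Sum>k\<in>?I. complex_of_real (1 / real n))" by (rule diag_sum) simp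
    also have "\<dots> = 1" using n0 by simp
    finally show ?thesis .
  qed
  have prob: "complex_of_real (p_C C a b x y) = ctrace_on ?I2 (cmult_on ?I2 (tensor (Mq x a) (Mq y b)) rho)"
    if ab: "a \<in> outcomes" "b \<in> outcomes" for a b x y
  proof -
    have "ctrace_on ?I2 (cmult_on ?I2 (tensor (Mq x a) (Mq y b)) rho)
        = (\<Sum>s\<in>?I2. \<Sum>t\<in>?I2. Mq x a (fst s) (fst t) * Mq y b (snd s) (snd t) * rho t s)"
      by (rule trace_form)
    also have "\<dots> = (\<Sum>s\<in>?I2. if fst s = snd s then (\<Sum>t\<in>?I2. if fst t = snd t then
          Mq x a (fst s) (fst t) * Mq y b (snd s) (snd t) * complex_of_real (1 / real n) else 0) else 0)"
      unfolding rho_def by (auto intro!: sum.cong)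
    also have "\<dots> = (\<Sum>i\<in>?I. \<Sum>k\<in>?I. Mq x a i k * Mq y b i k * complex_of_real (1 / real n))"
      by (simp add: diag_sum)
    also have "\<dots> = complex_of_real ((1 / real n) * (\<Sum>i<n. \<Sum>k<n. P x a i k * P y b i k))"
      by (simp add: Mq_def sum_distrib_left mult.commute)
    also have "(\<Sum>i<n. \<Sum>k<n. P x a i k * P y b i k) = real n * (1 + real_of_int (a * b) * C$x$y) / 4"
    proof -
      have e: "P x a i k * P y b i k = (1/4) * (idm i k * idm i k) + (real_of_int b / 4) * (idm i k * A y i k)
          + (real_of_int a / 4) * (idm k i * A x k i) + (real_of_int (a * b) / 4) * (A x i k * A y k i)" for i k
        by (simp add: P_def Asym[of y i k] Asym[of x i k] idm_def algebra_simps)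
      have s1: "(\<Sum>i<n. \<Sum>k<n. idm i k * idm i k) = real n"
      proof -
        have "(\<Sum>i<n. \<Sum>k<n. idm i k * idm i k) = (\<Sum>i<n. \<Sum>k<n. if k = i then 1 else (0::real))"
          by (intro sum.cong refl) (simp add: idm_def)
        also have "\<dots> = real n" by simp
        finally show ?thesis .
      qed
      have s2: "(\<Sum>i<n. \<Sum>k<n. idm i k * A z i k) = 0" for z
      proof -
        have "(\<Sum>i<n. \<Sum>k<n. idm i k * A z i k) = (\<Sum>i<n. \<Sum>k<n. if k = i then A z i i else 0)"
          by (intro sum.cong refl) (simp add: idm_def)
        then show ?thesis using Atr[of z] by simp
      qed
      have s3: "(\<Sum>i<n. \<Sum>k<n. idm k i * A z k i) = 0" for z
      proof -
        have "(\<Sum>i<n. \<Sum>k<n. idm k i * A z k i) = (\<Sum>i<n. \<Sum>k<n. if k = i then A z i i else 0)"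
          by (intro sum.cong refl) (simp add: idm_def)
        then show ?thesis using Atr[of z] by simp
      qed
      have s4: "(\<Sum>i<n. \<Sum>k<n. A x i k * A y k i) = real n * C$x$y"
      proof -
        have "(\<Sum>i<n. \<Sum>k<n. A x i k * A y k i) = (\<Sum>i<n. mm n (A x) (A y) i i)" by (simp add: mm_def)
        moreover have "(\<Sum>i<n. mm n (A x) (A y) i i) + (\<Sum>i<n. mm n (A y) (A x) i i) = (\<Sum>i<n. 2 * C$x$y * idm i i)"
          by (simp add: sum.distrib[symmetric] Aanti)
        moreover have "(\<Sum>i<n. mm n (A y) (A x) i i) = (\<Sum>i<n. mm n (A x) (A y) i i)" by (rule mm_trace_comm)
        ultimately show ?thesis by (simp add: idm_def)
      qed
      have "(\<Sum>i<n. \<Sum>k<n. P x a i k * P y b i k) = (1/4) * (\<Sum>i<n. \<Sum>k<n. idm i k * idm i k)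
          + (real_of_int b / 4) * (\<Sum>i<n. \<Sum>k<n. idm i k * A y i k) + (real_of_int a / 4) * (\<Sum>i<n. \<Sum>k<n. idm k i * A x k i)
          + (real_of_int (a * b) / 4) * (\<Sum>i<n. \<Sum>k<n. A x i k * A y k i)"
        unfolding e by (simp add: sum.distrib sum_distrib_left)
      also have "\<dots> = real n * (1 + real_of_int (a * b) * C$x$y) / 4"
        unfolding s1 s2 s3 s4 by (simp add: algebra_simps)
      finally show ?thesis .
    qed
    also have "(1 / real n) * (real n * (1 + real_of_int (a * b) * C$x$y) / 4) = p_C C a b x y"
      using n0 by (simp add: p_C_def)
    finally show ?thesis ..
  qed
  have "has_qrep n (p_C C)"
    unfolding has_qrep_def
    by (intro exI[of _ rho] exI[of _ Mq] conjI rpsd rtr allI povm ballI prob)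
  then show ?thesis by blast
qed

theorem theorem5p14:
  fixes C :: "real^'n^'n"
  assumes "C extreme_point_of elliptope"
    and "rank C = r_max CARD('n)"
  shows "sqrt 2 ^ (r_max CARD('n) div 2) \<le> real (qdim (p_C C))"
proof -
  have Cell: "C \<in> elliptope" using assms(1) by (simp add: extreme_point_of_def)
  obtain D where "has_qrep D (p_C C)" using exists_qrep[OF Cell] by blast
  then have hq: "has_qrep (qdim (p_C C)) (p_C C)" unfolding qdim_def by (rule LeastI)
  define m where "m = r_max CARD('n) div 2"
  define q where "q = qdim (p_C C)"
  have "4 ^ m \<le> q ^ 4" using qrep_bound[OF hq assms(1)] assms(2) by (simp add: m_def q_def)
  then have "real (4 ^ m) \<le> real (q ^ 4)" by (simp only: of_nat_le_iff)
  then have le: "(sqrt 2 ^ m) ^ 4 \<le> (real q) ^ 4"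
  proof -
    have "(sqrt 2 ^ m) ^ 4 = (sqrt 2 ^ 4) ^ m" by (simp flip: power_mult add: mult.commute)
    also have "sqrt 2 ^ 4 = (4::real)"
    proof -
      have "sqrt 2 ^ 4 = (sqrt 2 * sqrt 2) * (sqrt 2 * sqrt (2::real))" by (simp add: power4_eq_xxxx mult.assoc)
      also have "\<dots> = 4" by simp
      finally show ?thesis .
    qed
    finally have "(sqrt 2 ^ m) ^ 4 = 4 ^ m" .
    with \<open>real (4 ^ m) \<le> real (q ^ 4)\<close> show ?thesis by simp
  qed
  have "sqrt 2 ^ m \<le> real q"
    by (rule power_le_imp_le_base[of _ 3]) (use le in \<open>simp_all add: numeral_eq_Suc\<close>)
  then show ?thesis by (simp add: m_def q_def)
qed

end
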